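(* Let $A$ be a commutative noetherian ring and $\operatorname{mod} A$ the category of finitely generated $A$-modules. The map $\mathcal D\mapsto\operatorname{Ass}\mathcal D=\bigcup_{M\in\mathcal D}\operatorname{Ass} M$ induces a bijection between the set of full subcategories of $\operatorname{mod} A$ closed under submodules and extensions, and the set of all subsets of $\operatorname{Spec} A$.
   Context: $\operatorname{Ass} M$ is the set of associated primes of $M$. *)

theory Defs
  imports "HOL-Algebra.Algebra"
begin

definition fg_module :: "('a, 'c) ring_scheme \<Rightarrow> ('a, 'b) module \<Rightarrow> bool" where
  "fg_module A M \<longleftrightarrow> (\<exists>S. finite S \<and> S \<subseteq> carrier M \<and>
     carrier M = {finsum M (\<lambda>s. c s \<odot>\<^bsub>M\<^esub> s) S | c. c \<in> S \<rightarrow> carrier A})"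

definition mod_hom :: "('a, 'c) ring_scheme \<Rightarrow> ('a, 'b) module \<Rightarrow> ('a, 'd) module \<Rightarrow> ('b \<Rightarrow> 'd) \<Rightarrow> bool" where
  "mod_hom A M N f \<longleftrightarrow> f \<in> carrier M \<rightarrow> carrier N \<and>
     (\<forall>x\<in>carrier M. \<forall>y\<in>carrier M. f (x \<oplus>\<^bsub>M\<^esub> y) = f x \<oplus>\<^bsub>N\<^esub> f y) \<and>
     (\<forall>a\<in>carrier A. \<forall>x\<in>carrier M. f (a \<odot>\<^bsub>M\<^esub> x) = a \<odot>\<^bsub>N\<^esub> f x)"

definition mod_iso :: "('a, 'c) ring_scheme \<Rightarrow> ('a, 'b) module \<Rightarrow> ('a, 'd) module \<Rightarrow> ('b \<Rightarrow> 'd) \<Rightarrow> bool" where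
  "mod_iso A M N f \<longleftrightarrow> mod_hom A M N f \<and> bij_betw f (carrier M) (carrier N)"

definition short_exact :: "('a, 'c) ring_scheme \<Rightarrow> ('a, 'b) module \<Rightarrow> ('a, 'd) module \<Rightarrow> ('a, 'e) module
    \<Rightarrow> ('b \<Rightarrow> 'd) \<Rightarrow> ('d \<Rightarrow> 'e) \<Rightarrow> bool" where
  "short_exact A L M N f g \<longleftrightarrow> mod_hom A L M f \<and> inj_on f (carrier L) \<and>
     mod_hom A M N g \<and> g ` carrier M = carrier N \<and>
     f ` carrier L = {x \<in> carrier M. g x = \<zero>\<^bsub>N\<^esub>}"

definition Ass :: "('a, 'c) ring_scheme \<Rightarrow> ('a, 'b) module \<Rightarrow> 'a set set" where
  "Ass A M = {P. primeideal P A \<and>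
     (\<exists>x\<in>carrier M. P = {a \<in> carrier A. a \<odot>\<^bsub>M\<^esub> x = \<zero>\<^bsub>M\<^esub>})}"

definition Spec :: "('a, 'c) ring_scheme \<Rightarrow> 'a set set" where
  "Spec A = {P. primeideal P A}"

text \<open>Modules are represented on the carrier type 'a list set, which is large
  enough to contain an isomorphic copy of every finitely generated A-module
  (a quotient of A^n, elements = cosets of lists of length n).\<close>
type_synonym 'a fgmod = "('a, 'a list set) module"

definition sub_ext_closed :: "('a, 'c) ring_scheme \<Rightarrow> 'a fgmod set \<Rightarrow> bool" where
  "sub_ext_closed A D \<longleftrightarrow>
     D \<noteq> {} \<and>
     (\<forall>M\<in>D. module A M \<and> fg_module A M) \<and>
     (\<forall>M\<in>D. \<forall>N. module A N \<and> (\<exists>f. mod_iso A M N f) \<longrightarrow> N \<in> D) \<and>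
     (\<forall>M\<in>D. \<forall>H. submodule H A M \<longrightarrow> M\<lparr>carrier := H\<rparr> \<in> D) \<and>
     (\<forall>L\<in>D. \<forall>N\<in>D. \<forall>M. module A M \<and> fg_module A M \<and>
        (\<exists>f g. short_exact A L M N f g) \<longrightarrow> M \<in> D)"

end

theory Submission
  imports Defs
begin

definition colon :: "('a,'c) ring_scheme \<Rightarrow> ('a,'b,'e) module_scheme \<Rightarrow> 'b set \<Rightarrow> 'b \<Rightarrow> 'a set" where
  "colon R M N x = {a \<in> carrier R. a \<odot>\<^bsub>M\<^esub> x \<in> N}"

definition span :: "('a,'c) ring_scheme \<Rightarrow> ('a,'b,'e) module_scheme \<Rightarrow> 'b set \<Rightarrow> 'b set" where
  "span R M S = {finsum M (\<lambda>s. c s \<odot>\<^bsub>M\<^esub> s) S | c. c \<in> S \<rightarrow> carrier R}"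

lemma fg_module_span: "fg_module R M \<longleftrightarrow> (\<exists>S. finite S \<and> S \<subseteq> carrier M \<and> carrier M = span R M S)"
  unfolding fg_module_def span_def by simp

context module
begin

lemma submodule_zero: assumes H: "submodule H R M" shows "\<zero>\<^bsub>M\<^esub> \<in> H"
proof -
  obtain x where x: "x \<in> H" using submoduleE(2)[OF H] by auto
  then have "x \<oplus>\<^bsub>M\<^esub> \<ominus>\<^bsub>M\<^esub> x \<in> H" using submoduleE(3,5)[OF H] by auto
  moreover have "x \<in> carrier M" using x submoduleE(1)[OF H] by auto
  ultimately show ?thesis by (simp add: M.r_neg)
qed

lemma submodule_finsum:
  assumes H: "submodule H R M" and fin: "finite I" and f: "f \<in> I \<rightarrow> H"
  shows "finsum M f I \<in> H"
  using fin f
proof (induct I rule: finite_induct)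
  case empty
  then show ?case using submoduleE(1,2)[OF H] H
    by (simp add: submodule_zero)
next
  case (insert x F)
  have sub: "H \<subseteq> carrier M" using submoduleE(1)[OF H] .
  have "f \<in> F \<rightarrow> carrier M" "f x \<in> carrier M" using insert sub by auto
  then have "finsum M f (insert x F) = f x \<oplus>\<^bsub>M\<^esub> finsum M f F"
    using insert by (simp add: finsum_insert)
  then show ?case using insert submoduleE(5)[OF H] by auto
qed


lemma span_closed: "finite S \<Longrightarrow> S \<subseteq> carrier M \<Longrightarrow> span R M S \<subseteq> carrier M"
  unfolding span_def by (auto intro!: finsum_closed)

lemma span_smult:
  assumes S: "finite S" "S \<subseteq> carrier M" and c: "c \<in> S \<rightarrow> carrier R" and a: "a \<in> carrier R"
  shows "a \<odot>\<^bsub>M\<^esub> finsum M (\<lambda>s. c s \<odot>\<^bsub>M\<^esub> s) S = finsum M (\<lambda>s. (a \<otimes> c s) \<odot>\<^bsub>M\<^esub> s) S"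
proof -
  have "a \<odot>\<^bsub>M\<^esub> finsum M (\<lambda>s. c s \<odot>\<^bsub>M\<^esub> s) S = finsum M (\<lambda>s. a \<odot>\<^bsub>M\<^esub> (c s \<odot>\<^bsub>M\<^esub> s)) S"
    using S c a by (intro finsum_smult_ldistr) auto
  also have "\<dots> = finsum M (\<lambda>s. (a \<otimes> c s) \<odot>\<^bsub>M\<^esub> s) S"
    using S c a by (intro finsum_cong') (auto simp: smult_assoc1 Pi_iff subset_iff)
  finally show ?thesis .
qed

lemma span_submodule:
  assumes S: "finite S" "S \<subseteq> carrier M"
  shows "submodule (span R M S) R M"
proof (rule submoduleI)
  show "span R M S \<subseteq> carrier M" using span_closed S .
  have "finsum M (\<lambda>s. \<zero> \<odot>\<^bsub>M\<^esub> s) S = finsum M (\<lambda>s. \<zero>\<^bsub>M\<^esub>) S"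
    using S by (intro finsum_cong') auto
  also have "\<dots> = \<zero>\<^bsub>M\<^esub>" by simp
  finally show "\<zero>\<^bsub>M\<^esub> \<in> span R M S" unfolding span_def
    by (auto intro!: exI[of _ "\<lambda>s. \<zero>"])
next
  fix a x assume a: "a \<in> carrier R" and x: "x \<in> span R M S"
  then obtain c where c: "c \<in> S \<rightarrow> carrier R" and xc: "x = finsum M (\<lambda>s. c s \<odot>\<^bsub>M\<^esub> s) S"
    unfolding span_def by auto
  show "a \<odot>\<^bsub>M\<^esub> x \<in> span R M S" unfolding span_def xc span_smult[OF S c a]
    using a c by (auto intro!: exI[of _ "\<lambda>s. a \<otimes> c s"])
next
  fix x assume x: "x \<in> span R M S"
  then obtain c where c: "c \<in> S \<rightarrow> carrier R" and xc: "x = finsum M (\<lambda>s. c s \<odot>\<^bsub>M\<^esub> s) S"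
    unfolding span_def by auto
  have xM: "x \<in> carrier M" using x span_closed S by auto
  have "\<ominus>\<^bsub>M\<^esub> x = (\<ominus> \<one>) \<odot>\<^bsub>M\<^esub> x" using xM by (simp add: smult_l_minus)
  then show "\<ominus>\<^bsub>M\<^esub> x \<in> span R M S" unfolding span_def xc span_smult[OF S c R.a_inv_closed[OF R.one_closed]]
    using c by (auto intro!: exI[of _ "\<lambda>s. \<ominus> \<one> \<otimes> c s"])
next
  fix x y assume x: "x \<in> span R M S" and y: "y \<in> span R M S"
  then obtain c d where c: "c \<in> S \<rightarrow> carrier R" and xc: "x = finsum M (\<lambda>s. c s \<odot>\<^bsub>M\<^esub> s) S"
    and d: "d \<in> S \<rightarrow> carrier R" and yd: "y = finsum M (\<lambda>s. d s \<odot>\<^bsub>M\<^esub> s) S"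
    unfolding span_def by auto
  have "x \<oplus>\<^bsub>M\<^esub> y = finsum M (\<lambda>s. c s \<odot>\<^bsub>M\<^esub> s \<oplus>\<^bsub>M\<^esub> d s \<odot>\<^bsub>M\<^esub> s) S"
    unfolding xc yd using c d S by (intro finsum_addf[symmetric]) auto
  also have "\<dots> = finsum M (\<lambda>s. (c s \<oplus> d s) \<odot>\<^bsub>M\<^esub> s) S"
    using c d S by (intro finsum_cong') (auto simp: smult_l_distr Pi_iff subset_iff)
  finally show "x \<oplus>\<^bsub>M\<^esub> y \<in> span R M S" unfolding span_def
    using c d by (auto intro!: exI[of _ "\<lambda>s. c s \<oplus> d s"])
qed

lemma span_incl:
  assumes S: "finite S" "S \<subseteq> carrier M"
  shows "S \<subseteq> span R M S"
proof
  fix t assume t: "t \<in> S"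
  define c where "c = (\<lambda>s. if s = t then \<one> else \<zero>)"
  have c: "c \<in> S \<rightarrow> carrier R" unfolding c_def by auto
  have S': "S = insert t (S - {t})" using t by auto
  have "finsum M (\<lambda>s. c s \<odot>\<^bsub>M\<^esub> s) S = finsum M (\<lambda>s. c s \<odot>\<^bsub>M\<^esub> s) (insert t (S - {t}))"
    using S' by simp
  also have "\<dots> = c t \<odot>\<^bsub>M\<^esub> t \<oplus>\<^bsub>M\<^esub> finsum M (\<lambda>s. c s \<odot>\<^bsub>M\<^esub> s) (S - {t})"
    using S c t by (intro finsum_insert) auto
  also have "finsum M (\<lambda>s. c s \<odot>\<^bsub>M\<^esub> s) (S - {t}) = finsum M (\<lambda>s. \<zero>\<^bsub>M\<^esub>) (S - {t})"
    using S by (intro finsum_cong') (auto simp: c_def)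
  also have "c t \<odot>\<^bsub>M\<^esub> t = t" using S t by (auto simp: c_def)
  finally have "finsum M (\<lambda>s. c s \<odot>\<^bsub>M\<^esub> s) S = t" using S t by auto
  then show "t \<in> span R M S" unfolding span_def using c by blast
qed

lemma span_least:
  assumes S: "finite S" "S \<subseteq> carrier M" and H: "submodule H R M" "S \<subseteq> H"
  shows "span R M S \<subseteq> H"
  unfolding span_def using H S
  by (auto intro!: submodule_finsum submoduleE(4)[OF H(1)])

end


definition selfmod :: "('a,'c) ring_scheme \<Rightarrow> ('a,'a) module" where
  "selfmod R = \<lparr>carrier = carrier R, monoid.mult = monoid.mult R, one = one R, ring.zero = ring.zero R, ring.add = ring.add R, smult = monoid.mult R\<rparr>"

lemma finsum_selfmod: "finsum (selfmod R) = finsum R"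
  by (intro ext) (simp add: finsum_def finprod_def selfmod_def)

lemma a_inv_selfmod: "a_inv (selfmod R) = a_inv R"
  by (intro ext) (simp add: a_inv_def m_inv_def selfmod_def)

lemma selfmod_simps[simp]: "carrier (selfmod R) = carrier R" "ring.zero (selfmod R) = ring.zero R"
  "ring.add (selfmod R) = ring.add R" "smult (selfmod R) = monoid.mult R"
  by (simp_all add: selfmod_def)

lemma selfmod_module:
  assumes "cring R" shows "module R (selfmod R)"
proof -
  interpret cring R by fact
  have ag: "abelian_group (selfmod R)"
    apply (rule abelian_groupI) apply (auto simp: a_ac) done
  show ?thesis
    by (rule moduleI[OF assms ag]) (auto simp: l_distr r_distr m_assoc)
qed

lemma ideal_iff_submodule:
  assumes "cring R" shows "ideal I R \<longleftrightarrow> submodule I R (selfmod R)"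
proof -
  interpret cring R by fact
  interpret S: module R "selfmod R" using selfmod_module[OF assms] .
  show ?thesis
  proof
    assume "ideal I R"
    then interpret ideal I R .
    show "submodule I R (selfmod R)"
      by (rule S.submoduleI) (auto simp: a_inv_selfmod I_l_closed a_inv_closed)
  next
    assume I: "submodule I R (selfmod R)"
    have sub: "I \<subseteq> carrier R" using S.submoduleE(1)[OF I] by simp
    have sg: "subgroup I (add_monoid R)"
      by (rule add.subgroupI) (use S.submoduleE[OF I] in \<open>auto simp: a_inv_selfmod\<close>)
    have cl: "x \<otimes>\<^bsub>R\<^esub> a \<in> I" if "a \<in> I" "x \<in> carrier R" for a x
        using S.submoduleE(4)[OF I, of x a] that by simp
      have cl2: "a \<otimes>\<^bsub>R\<^esub> x \<in> I" if "a \<in> I" "x \<in> carrier R" for a x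
        using cl[OF that] m_comm[of a x] that sub by auto
      show "ideal I R"
        by (rule idealI[OF ring_axioms sg cl cl2])
  qed
qed

context module
begin

lemma submodule_sub_iff:
  assumes H: "submodule H R M"
  shows "submodule W R (M\<lparr>carrier := H\<rparr>) \<longleftrightarrow> submodule W R M \<and> W \<subseteq> H"
proof -
  interpret MH: module R "M\<lparr>carrier := H\<rparr>"
    using submodule.submodule_is_module[OF H] module_axioms by auto
  have Hs: "H \<subseteq> carrier M" using submoduleE(1)[OF H] .
  have neg: "\<ominus>\<^bsub>M\<lparr>carrier := H\<rparr>\<^esub> x = \<ominus>\<^bsub>M\<^esub> x" if "x \<in> H" for x
  proof -
    have "\<ominus>\<^bsub>M\<lparr>carrier := H\<rparr>\<^esub> x \<in> H" using that MH.a_inv_closed by auto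
    moreover have "\<ominus>\<^bsub>M\<lparr>carrier := H\<rparr>\<^esub> x \<oplus>\<^bsub>M\<^esub> x = \<zero>\<^bsub>M\<^esub>"
      using MH.l_neg[of x] that by simp
    ultimately show ?thesis using that Hs
      by (metis M.add.inv_equality subsetD)
  qed
  show ?thesis
  proof
    assume W: "submodule W R (M\<lparr>carrier := H\<rparr>)"
    have WH: "W \<subseteq> H" using MH.submoduleE(1)[OF W] by simp
    have "submodule W R M"
    proof (rule submoduleI)
      show "W \<subseteq> carrier M" using WH Hs by auto
      show "\<zero>\<^bsub>M\<^esub> \<in> W" using MH.submodule_zero[OF W] by simp
      show "\<ominus>\<^bsub>M\<^esub> a \<in> W" if "a \<in> W" for a using MH.submoduleE(3)[OF W that] neg[of a] that WH by auto
      show "a \<oplus>\<^bsub>M\<^esub> b \<in> W" if "a \<in> W" "b \<in> W" for a b using MH.submoduleE(5)[OF W that] by simp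
      show "a \<odot>\<^bsub>M\<^esub> x \<in> W" if "a \<in> carrier R" "x \<in> W" for a x using MH.submoduleE(4)[OF W that] by simp
    qed
    then show "submodule W R M \<and> W \<subseteq> H" using WH by simp
  next
    assume W: "submodule W R M \<and> W \<subseteq> H"
    show "submodule W R (M\<lparr>carrier := H\<rparr>)"
    proof (rule MH.submoduleI)
      show "W \<subseteq> carrier (M\<lparr>carrier := H\<rparr>)" using W by simp
      show "\<zero>\<^bsub>M\<lparr>carrier := H\<rparr>\<^esub> \<in> W" using submodule_zero W by simp
      show "\<ominus>\<^bsub>M\<lparr>carrier := H\<rparr>\<^esub> a \<in> W" if "a \<in> W" for a using submoduleE(3) W that neg[of a] by auto
      show "a \<oplus>\<^bsub>M\<lparr>carrier := H\<rparr>\<^esub> b \<in> W" if "a \<in> W" "b \<in> W" for a b using submoduleE(5) W that by simp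
      show "a \<odot>\<^bsub>M\<lparr>carrier := H\<rparr>\<^esub> x \<in> W" if "a \<in> carrier R" "x \<in> W" for a x using submoduleE(4) W that by simp
    qed
  qed
qed

lemma span_sub_record:
  assumes H: "submodule H R M" and S: "finite S" "S \<subseteq> H"
  shows "span R (M\<lparr>carrier := H\<rparr>) S = span R M S"
proof -
  interpret MH: module R "M\<lparr>carrier := H\<rparr>"
    using submodule.submodule_is_module[OF H] module_axioms by auto
  have Hs: "H \<subseteq> carrier M" using submoduleE(1)[OF H] .
  have SM: "S \<subseteq> carrier M" using S Hs by auto
  have S': "S \<subseteq> carrier (M\<lparr>carrier := H\<rparr>)" using S by simp
  have a: "submodule (span R (M\<lparr>carrier := H\<rparr>) S) R M" "span R (M\<lparr>carrier := H\<rparr>) S \<subseteq> H"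
    using MH.span_submodule[OF S(1) S'] submodule_sub_iff[OF H] by auto
  have b: "submodule (span R M S) R M" using span_submodule[OF S(1) SM] .
  have bH: "span R M S \<subseteq> H" using span_least[OF S(1) SM H S(2)] .
  show ?thesis
  proof
    show "span R (M\<lparr>carrier := H\<rparr>) S \<subseteq> span R M S"
      using MH.span_least[OF S(1) S'] submodule_sub_iff[OF H] b bH span_incl[OF S(1) SM] by auto
    show "span R M S \<subseteq> span R (M\<lparr>carrier := H\<rparr>) S"
      using span_least[OF S(1) SM a(1)] MH.span_incl[OF S(1) S'] by auto
  qed
qed


lemma span_insert:
  assumes S: "finite S" "S \<subseteq> carrier M" and s: "s \<in> carrier M"
  shows "span R M (insert s S) = {k \<oplus>\<^bsub>M\<^esub> a \<odot>\<^bsub>M\<^esub> s | k a. k \<in> span R M S \<and> a \<in> carrier R}"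
    (is "_ = ?X")
proof -
  have SS: "finite (insert s S)" "insert s S \<subseteq> carrier M" using S s by auto
  have spS: "span R M S \<subseteq> carrier M" using span_closed[OF S] .
  have subS: "submodule (span R M S) R M" using span_submodule[OF S] .
  have Xsub: "submodule ?X R M"
  proof (rule submoduleI)
    show "?X \<subseteq> carrier M" using spS s by auto
    have "\<zero>\<^bsub>M\<^esub> = \<zero>\<^bsub>M\<^esub> \<oplus>\<^bsub>M\<^esub> \<zero> \<odot>\<^bsub>M\<^esub> s" using s by simp
    then show "\<zero>\<^bsub>M\<^esub> \<in> ?X" using submodule_zero[OF subS] by blast
  next
    fix x assume "x \<in> ?X"
    then obtain k a where k: "k \<in> span R M S" and a: "a \<in> carrier R" and x: "x = k \<oplus>\<^bsub>M\<^esub> a \<odot>\<^bsub>M\<^esub> s" by auto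
    have kM: "k \<in> carrier M" using k spS by auto
    have "\<ominus>\<^bsub>M\<^esub> x = \<ominus>\<^bsub>M\<^esub> k \<oplus>\<^bsub>M\<^esub> (\<ominus> a) \<odot>\<^bsub>M\<^esub> s"
      using kM a s by (simp add: x smult_l_minus M.minus_add M.a_comm)
    then show "\<ominus>\<^bsub>M\<^esub> x \<in> ?X" using submoduleE(3)[OF subS k] a by blast
  next
    fix x y assume "x \<in> ?X" "y \<in> ?X"
    then obtain k a k' a' where k: "k \<in> span R M S" and a: "a \<in> carrier R" and x: "x = k \<oplus>\<^bsub>M\<^esub> a \<odot>\<^bsub>M\<^esub> s"
      and k': "k' \<in> span R M S" and a': "a' \<in> carrier R" and y: "y = k' \<oplus>\<^bsub>M\<^esub> a' \<odot>\<^bsub>M\<^esub> s" by blast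
    have kM: "k \<in> carrier M" "k' \<in> carrier M" using k k' spS by auto
    have "x \<oplus>\<^bsub>M\<^esub> y = (k \<oplus>\<^bsub>M\<^esub> k') \<oplus>\<^bsub>M\<^esub> (a \<oplus> a') \<odot>\<^bsub>M\<^esub> s"
      using kM a a' s by (simp add: x y smult_l_distr M.a_ac)
    then show "x \<oplus>\<^bsub>M\<^esub> y \<in> ?X" using submoduleE(5)[OF subS k k'] a a' by blast
  next
    fix b x assume b: "b \<in> carrier R" and "x \<in> ?X"
    then obtain k a where k: "k \<in> span R M S" and a: "a \<in> carrier R" and x: "x = k \<oplus>\<^bsub>M\<^esub> a \<odot>\<^bsub>M\<^esub> s" by auto
    have kM: "k \<in> carrier M" using k spS by auto
    have "b \<odot>\<^bsub>M\<^esub> x = b \<odot>\<^bsub>M\<^esub> k \<oplus>\<^bsub>M\<^esub> (b \<otimes> a) \<odot>\<^bsub>M\<^esub> s"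
      using kM a b s by (simp add: x smult_r_distr smult_assoc1)
    then show "b \<odot>\<^bsub>M\<^esub> x \<in> ?X" using submoduleE(4)[OF subS b k] a b by blast
  qed
  have ins: "insert s S \<subseteq> ?X"
  proof
    fix t assume "t \<in> insert s S"
    then show "t \<in> ?X"
    proof
      assume t: "t = s"
      have "t = \<zero>\<^bsub>M\<^esub> \<oplus>\<^bsub>M\<^esub> \<one> \<odot>\<^bsub>M\<^esub> s" using s t by simp
      then show ?thesis using submodule_zero[OF subS] by blast
    next
      assume t: "t \<in> S"
      have "t = t \<oplus>\<^bsub>M\<^esub> \<zero> \<odot>\<^bsub>M\<^esub> s" using s t S by auto
      then show ?thesis using span_incl[OF S] t by blast
    qed
  qed
  have sub2: "submodule (span R M (insert s S)) R M" using span_submodule[OF SS] .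
  have inc2: "insert s S \<subseteq> span R M (insert s S)" using span_incl[OF SS] .
  have spSsub: "span R M S \<subseteq> span R M (insert s S)"
    using span_least[OF S sub2] inc2 by auto
  show ?thesis
  proof
    show "span R M (insert s S) \<subseteq> ?X" using span_least[OF SS Xsub ins] .
    show "?X \<subseteq> span R M (insert s S)"
    proof
      fix x assume "x \<in> ?X"
      then obtain k a where k: "k \<in> span R M S" and a: "a \<in> carrier R" and x: "x = k \<oplus>\<^bsub>M\<^esub> a \<odot>\<^bsub>M\<^esub> s" by auto
      have "a \<odot>\<^bsub>M\<^esub> s \<in> span R M (insert s S)" using submoduleE(4)[OF sub2 a] inc2 by auto
      then show "x \<in> span R M (insert s S)" using x submoduleE(5)[OF sub2] k spSsub by auto
    qed
  qed
qed

end
lemma fg_sub_iff: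
  fixes M :: "('a,'b) module"
  assumes M: "module R M" and H: "submodule H R M"
  shows "fg_module R (M\<lparr>carrier := H\<rparr>) \<longleftrightarrow> (\<exists>S. finite S \<and> S \<subseteq> H \<and> H = span R M S)"
  unfolding fg_module_span using module.span_sub_record[OF M H] by auto



lemma (in abelian_group) cancel_r:
  assumes "x \<in> carrier G" "y \<in> carrier G" "z \<in> carrier G"
  shows "(x \<oplus> z) \<ominus> (y \<oplus> z) = x \<ominus> y"
proof -
  have "(x \<oplus> z) \<ominus> (y \<oplus> z) = x \<oplus> (z \<oplus> (\<ominus> y \<oplus> \<ominus> z))"
    using assms by (simp add: a_minus_def minus_add a_assoc)
  also have "z \<oplus> (\<ominus> y \<oplus> \<ominus> z) = \<ominus> y"
    using assms a_lcomm[of z "\<ominus> y" "\<ominus> z"] by (simp add: r_neg)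
  finally show ?thesis using assms by (simp add: a_minus_def)
qed

lemma (in abelian_group) minus_plus_cancel:
  assumes "x \<in> carrier G" "y \<in> carrier G"
  shows "(x \<ominus> y) \<oplus> y = x"
  using assms by (simp add: a_minus_def a_assoc l_neg)

lemma (in noetherian_ring) noeth_max_ideal:
  assumes ne: "SS \<noteq> {}" and id: "\<And>Iq. Iq \<in> SS \<Longrightarrow> ideal Iq R"
  shows "\<exists>J\<in>SS. \<forall>Iq\<in>SS. J \<subseteq> Iq \<longrightarrow> Iq = J"
proof (rule Zorn_Lemma2, intro ballI)
  fix C assume C: "C \<in> chains SS"
  show "\<exists>U\<in>SS. \<forall>Y\<in>C. Y \<subseteq> U"
  proof (cases "C = {}")
    case True then show ?thesis using ne by auto
  next
    case False
    have ch: "subset.chain {Iq. ideal Iq R} C"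
      using C id unfolding chains_def chain_subset_def subset.chain_def by blast
    have "\<Union>C \<in> C" using ideal_chain_is_trivial[OF False ch] .
    then show ?thesis using C unfolding chains_def by auto
  qed
qed

context module
begin

lemma zero_submodule: "submodule {\<zero>\<^bsub>M\<^esub>} R M"
  by (rule submoduleI) auto

lemma span_empty: "span R M {} = {\<zero>\<^bsub>M\<^esub>}"
  unfolding span_def by auto

lemma submodule_Int:
  assumes "submodule H R M" "submodule K R M"
  shows "submodule (H \<inter> K) R M"
  using submoduleE[OF assms(1)] submoduleE[OF assms(2)] submodule_zero[OF assms(1)] submodule_zero[OF assms(2)]
  by (intro submoduleI) auto

lemma finsum_smult_rdistr:
  assumes G: "finite G" and r: "r \<in> G \<rightarrow> carrier R" and s: "s \<in> carrier M"
  shows "(finsum R r G) \<odot>\<^bsub>M\<^esub> s = finsum M (\<lambda>g. r g \<odot>\<^bsub>M\<^esub> s) G"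
  using G r
proof (induct G rule: finite_induct)
  case empty then show ?case using s by simp
next
  case (insert x F)
  then have "finsum R r (insert x F) = r x \<oplus> finsum R r F" by (simp add: R.finsum_insert)
  moreover have "finsum M (\<lambda>g. r g \<odot>\<^bsub>M\<^esub> s) (insert x F) = r x \<odot>\<^bsub>M\<^esub> s \<oplus>\<^bsub>M\<^esub> finsum M (\<lambda>g. r g \<odot>\<^bsub>M\<^esub> s) F"
    using insert s by (intro finsum_insert) auto
  ultimately show ?case using insert s by (simp add: smult_l_distr)
qed

lemma Idl_finsum:
  assumes G: "finite G" "G \<subseteq> carrier R" and a: "a \<in> Idl\<^bsub>R\<^esub> G"
  shows "\<exists>r \<in> G \<rightarrow> carrier R. a = finsum R (\<lambda>g. r g \<otimes> g) G"
proof -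
  interpret S: module R "selfmod R" using selfmod_module[OF R.is_cring] .
  have "submodule (span R (selfmod R) G) R (selfmod R)"
    using S.span_submodule[of G] G by simp
  then have "ideal (span R (selfmod R) G) R" using ideal_iff_submodule[OF R.is_cring] by simp
  moreover have "G \<subseteq> span R (selfmod R) G" using S.span_incl[of G] G by simp
  ultimately have "Idl\<^bsub>R\<^esub> G \<subseteq> span R (selfmod R) G" using R.genideal_minimal by blast
  then have "a \<in> span R (selfmod R) G" using a by auto
  then show ?thesis unfolding span_def finsum_selfmod by auto
qed

lemma noeth_sub_fg:
  assumes noeth: "noetherian_ring R" and S: "finite S" "S \<subseteq> carrier M"
  shows "submodule H R M \<Longrightarrow> H \<subseteq> span R M S \<Longrightarrow> \<exists>T. finite T \<and> T \<subseteq> H \<and> H = span R M T"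
  using S
proof (induct S arbitrary: H rule: finite_induct)
  case empty
  then have "H = {\<zero>\<^bsub>M\<^esub>}" using span_empty submodule_zero by auto
  then show ?case using span_empty by auto
next
  case (insert s S0)
  note H = insert(4) and Hsp = insert(5)
  have S0: "finite S0" "S0 \<subseteq> carrier M" and s: "s \<in> carrier M" using insert by auto
  have spS0: "span R M S0 \<subseteq> carrier M" using span_closed[OF S0] .
  have subS0: "submodule (span R M S0) R M" using span_submodule[OF S0] .
  have HM: "H \<subseteq> carrier M" using submoduleE(1)[OF H] .
  define Iq where "Iq = {a \<in> carrier R. \<exists>k\<in>span R M S0. k \<oplus>\<^bsub>M\<^esub> a \<odot>\<^bsub>M\<^esub> s \<in> H}"
  have Iqc: "Iq \<subseteq> carrier R" unfolding Iq_def by auto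
  have I_l: "x \<otimes> a \<in> Iq" if aI: "a \<in> Iq" and xR: "x \<in> carrier R" for a x
  proof -
    obtain k where k: "k \<in> span R M S0" "k \<oplus>\<^bsub>M\<^esub> a \<odot>\<^bsub>M\<^esub> s \<in> H" and a: "a \<in> carrier R"
      using aI unfolding Iq_def by auto
    have kM: "k \<in> carrier M" using k spS0 by auto
    have "x \<odot>\<^bsub>M\<^esub> (k \<oplus>\<^bsub>M\<^esub> a \<odot>\<^bsub>M\<^esub> s) = x \<odot>\<^bsub>M\<^esub> k \<oplus>\<^bsub>M\<^esub> (x \<otimes> a) \<odot>\<^bsub>M\<^esub> s"
      using kM a s xR by (simp add: smult_r_distr smult_assoc1)
    then have "x \<odot>\<^bsub>M\<^esub> k \<oplus>\<^bsub>M\<^esub> (x \<otimes> a) \<odot>\<^bsub>M\<^esub> s \<in> H" using submoduleE(4)[OF H xR k(2)] by simp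
    then show ?thesis unfolding Iq_def using submoduleE(4)[OF subS0 xR k(1)] xR a by auto
  qed
  have I_r: "a \<otimes> x \<in> Iq" if "a \<in> Iq" "x \<in> carrier R" for a x
    using I_l[OF that] that Iqc R.m_comm[of a x] by auto
  have sgI: "subgroup Iq (add_monoid R)"
  proof (rule R.add.subgroupI)
    show "Iq \<subseteq> carrier R" using Iqc by simp
    have "\<zero>\<^bsub>M\<^esub> \<oplus>\<^bsub>M\<^esub> \<zero> \<odot>\<^bsub>M\<^esub> s \<in> H" using s submodule_zero[OF H] by simp
    then have "\<zero> \<in> Iq" unfolding Iq_def using submodule_zero[OF subS0] by auto
    then show "Iq \<noteq> {}" by auto
  next
    fix a assume "a \<in> Iq"
    then obtain k where k: "k \<in> span R M S0" "k \<oplus>\<^bsub>M\<^esub> a \<odot>\<^bsub>M\<^esub> s \<in> H" and a: "a \<in> carrier R"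
      unfolding Iq_def by auto
    have kM: "k \<in> carrier M" using k spS0 by auto
    have "\<ominus>\<^bsub>M\<^esub> (k \<oplus>\<^bsub>M\<^esub> a \<odot>\<^bsub>M\<^esub> s) = \<ominus>\<^bsub>M\<^esub> k \<oplus>\<^bsub>M\<^esub> (\<ominus> a) \<odot>\<^bsub>M\<^esub> s"
      using kM a s by (simp add: smult_l_minus M.minus_add M.a_comm)
    then have "\<ominus>\<^bsub>M\<^esub> k \<oplus>\<^bsub>M\<^esub> (\<ominus> a) \<odot>\<^bsub>M\<^esub> s \<in> H" using submoduleE(3)[OF H k(2)] by simp
    then show "\<ominus> a \<in> Iq" unfolding Iq_def using submoduleE(3)[OF subS0 k(1)] a
      by auto
  next
    fix a b assume "a \<in> Iq" "b \<in> Iq"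
    then obtain k k' where k: "k \<in> span R M S0" "k \<oplus>\<^bsub>M\<^esub> a \<odot>\<^bsub>M\<^esub> s \<in> H" and a: "a \<in> carrier R"
      and k': "k' \<in> span R M S0" "k' \<oplus>\<^bsub>M\<^esub> b \<odot>\<^bsub>M\<^esub> s \<in> H" and b: "b \<in> carrier R"
      unfolding Iq_def by auto
    have kM: "k \<in> carrier M" "k' \<in> carrier M" using k k' spS0 by auto
    have "(k \<oplus>\<^bsub>M\<^esub> a \<odot>\<^bsub>M\<^esub> s) \<oplus>\<^bsub>M\<^esub> (k' \<oplus>\<^bsub>M\<^esub> b \<odot>\<^bsub>M\<^esub> s) = (k \<oplus>\<^bsub>M\<^esub> k') \<oplus>\<^bsub>M\<^esub> (a \<oplus> b) \<odot>\<^bsub>M\<^esub> s"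
      using kM a b s by (simp add: smult_l_distr M.a_ac)
    then have "(k \<oplus>\<^bsub>M\<^esub> k') \<oplus>\<^bsub>M\<^esub> (a \<oplus> b) \<odot>\<^bsub>M\<^esub> s \<in> H" using submoduleE(5)[OF H k(2) k'(2)] by simp
    then show "a \<oplus> b \<in> Iq" unfolding Iq_def using submoduleE(5)[OF subS0 k(1) k'(1)] a b by auto
  qed
  have idI: "ideal Iq R" by (rule idealI[OF R.ring_axioms sgI I_l I_r])
  interpret NR: noetherian_ring R by fact
  obtain G where G: "G \<subseteq> carrier R" "finite G" "Iq = Idl\<^bsub>R\<^esub> G"
    using NR.finetely_gen[OF idI] by auto
  have GI: "G \<subseteq> Iq" using G R.genideal_self by auto
  have "\<forall>g\<in>G. \<exists>k. k \<in> span R M S0 \<and> k \<oplus>\<^bsub>M\<^esub> g \<odot>\<^bsub>M\<^esub> s \<in> H" using GI unfolding Iq_def by auto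
  then obtain kf where kf: "\<And>g. g \<in> G \<Longrightarrow> kf g \<in> span R M S0 \<and> kf g \<oplus>\<^bsub>M\<^esub> g \<odot>\<^bsub>M\<^esub> s \<in> H"
    by metis
  define hf where "hf g = kf g \<oplus>\<^bsub>M\<^esub> g \<odot>\<^bsub>M\<^esub> s" for g
  have H0: "submodule (H \<inter> span R M S0) R M" using submodule_Int[OF H subS0] .
  have ex: "\<exists>T. finite T \<and> T \<subseteq> H \<inter> span R M S0 \<and> H \<inter> span R M S0 = span R M T"
    using insert(3)[OF H0] S0(2) by blast
  then obtain T0 where T0: "finite T0" "T0 \<subseteq> H \<inter> span R M S0" "H \<inter> span R M S0 = span R M T0"
    by blast
  define T where "T = T0 \<union> hf ` G"
  have T: "finite T" "T \<subseteq> H" using T0 G kf unfolding T_def hf_def by auto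
  have TM: "T \<subseteq> carrier M" using T HM by auto
  have subT: "submodule (span R M T) R M" using span_submodule[OF T(1) TM] .
  have TsT: "T \<subseteq> span R M T" using span_incl[OF T(1) TM] .
  have "H \<subseteq> span R M T"
  proof
    fix h assume h: "h \<in> H"
    then have "h \<in> span R M (insert s S0)" using Hsp by auto
    then obtain k a where k: "k \<in> span R M S0" and a: "a \<in> carrier R" and hk: "h = k \<oplus>\<^bsub>M\<^esub> a \<odot>\<^bsub>M\<^esub> s"
      using span_insert[OF S0 s] by auto
    have kM: "k \<in> carrier M" using k spS0 by auto
    have "a \<in> Iq" unfolding Iq_def using k a h hk by auto
    then obtain r where r: "r \<in> G \<rightarrow> carrier R" and ar: "a = finsum R (\<lambda>g. r g \<otimes> g) G"
      using Idl_finsum[OF G(2) G(1)] G(3) by auto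
    define h' where "h' = finsum M (\<lambda>g. r g \<odot>\<^bsub>M\<^esub> hf g) G"
    have hfT: "hf g \<in> T" if "g \<in> G" for g using that unfolding T_def by auto
    have h'T: "h' \<in> span R M T" unfolding h'_def
      using r hfT TsT by (intro submodule_finsum[OF subT G(2)]) (auto intro!: submoduleE(4)[OF subT])
    have kfM: "kf g \<in> carrier M" if "g \<in> G" for g using kf[OF that] spS0 by auto
    define k' where "k' = finsum M (\<lambda>g. r g \<odot>\<^bsub>M\<^esub> kf g) G"
    have k'S0: "k' \<in> span R M S0" unfolding k'_def
      using r kf by (intro submodule_finsum[OF subS0 G(2)]) (auto intro!: submoduleE(4)[OF subS0])
    have k'M: "k' \<in> carrier M" using k'S0 spS0 by auto
    have "h' = finsum M (\<lambda>g. r g \<odot>\<^bsub>M\<^esub> kf g \<oplus>\<^bsub>M\<^esub> (r g \<otimes> g) \<odot>\<^bsub>M\<^esub> s) G"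
      unfolding h'_def hf_def using r G kfM s
      by (intro finsum_cong') (auto simp: smult_r_distr smult_assoc1 subset_iff Pi_iff)
    also have "\<dots> = k' \<oplus>\<^bsub>M\<^esub> finsum M (\<lambda>g. (r g \<otimes> g) \<odot>\<^bsub>M\<^esub> s) G"
      unfolding k'_def using r G kfM s by (intro finsum_addf) (auto simp: subset_iff Pi_iff)
    also have "finsum M (\<lambda>g. (r g \<otimes> g) \<odot>\<^bsub>M\<^esub> s) G = a \<odot>\<^bsub>M\<^esub> s"
      unfolding ar using r G s by (intro finsum_smult_rdistr[symmetric]) (auto simp: subset_iff Pi_iff)
    finally have h'eq: "h' = k' \<oplus>\<^bsub>M\<^esub> a \<odot>\<^bsub>M\<^esub> s" .
    have "h \<ominus>\<^bsub>M\<^esub> h' = k \<ominus>\<^bsub>M\<^esub> k'" unfolding hk h'eq using kM k'M a s by (intro M.cancel_r) auto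
    then have d1: "h \<ominus>\<^bsub>M\<^esub> h' \<in> span R M S0"
      using submoduleE(3,5)[OF subS0] k k'S0 by (auto simp: a_minus_def)
    have h'H: "h' \<in> H" using h'T span_least[OF T(1) TM H T(2)] by auto
    have d2: "h \<ominus>\<^bsub>M\<^esub> h' \<in> H" using submoduleE(3,5)[OF H] h h'H by (auto simp: a_minus_def)
    have "h \<ominus>\<^bsub>M\<^esub> h' \<in> span R M T0" using d1 d2 T0(3) by auto
    moreover have "span R M T0 \<subseteq> span R M T"
      using span_least[OF T0(1) _ subT] T0(2) HM TsT unfolding T_def by auto
    ultimately have "h \<ominus>\<^bsub>M\<^esub> h' \<in> span R M T" by auto
    then have "(h \<ominus>\<^bsub>M\<^esub> h') \<oplus>\<^bsub>M\<^esub> h' \<in> span R M T" using submoduleE(5)[OF subT] h'T by auto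
    moreover have "(h \<ominus>\<^bsub>M\<^esub> h') \<oplus>\<^bsub>M\<^esub> h' = h" using h HM h'H by (intro M.minus_plus_cancel) auto
    ultimately show "h \<in> span R M T" by simp
  qed
  moreover have "span R M T \<subseteq> H" using span_least[OF T(1) TM H T(2)] .
  ultimately show ?case using T by blast
qed

lemma finite_subset_chain:
  assumes "finite T" "T \<subseteq> \<Union>C" "C \<noteq> {}" "\<forall>A\<in>C. \<forall>B\<in>C. A \<subseteq> B \<or> B \<subseteq> A"
  shows "\<exists>Y\<in>C. T \<subseteq> Y"
  using assms(1,2)
proof (induct T rule: finite_induct)
  case empty then show ?case using assms(3) by auto
next
  case (insert x F)
  then obtain Y0 where X: "Y0 \<in> C" "F \<subseteq> Y0" by auto
  obtain Y where Y: "Y \<in> C" "x \<in> Y" using insert(4) by auto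
  show ?case using assms(4) X Y by (metis insert_subset subset_trans order_refl)
qed

lemma noeth_max_submodule:
  assumes noeth: "noetherian_ring R" and S: "finite S" "S \<subseteq> carrier M" "carrier M = span R M S"
    and ne: "SS \<noteq> {}" and sub: "\<And>W. W \<in> SS \<Longrightarrow> submodule W R M"
  shows "\<exists>N\<in>SS. \<forall>W\<in>SS. N \<subseteq> W \<longrightarrow> W = N"
proof (rule Zorn_Lemma2, intro ballI)
  fix C assume C: "C \<in> chains SS"
  show "\<exists>U\<in>SS. \<forall>Y\<in>C. Y \<subseteq> U"
  proof (cases "C = {}")
    case True then show ?thesis using ne by auto
  next
    case False
    have CS: "C \<subseteq> SS" and ch: "\<forall>A\<in>C. \<forall>B\<in>C. A \<subseteq> B \<or> B \<subseteq> A"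
      using C unfolding chains_def chain_subset_def by auto
    have subC: "submodule W R M" if "W \<in> C" for W using sub CS that by auto
    have U: "submodule (\<Union>C) R M"
    proof (rule submoduleI)
      show "\<Union>C \<subseteq> carrier M" using subC submoduleE(1) by blast
      obtain W where "W \<in> C" using False by auto
      then show "\<zero>\<^bsub>M\<^esub> \<in> \<Union>C" using subC submodule_zero by blast
      show "\<ominus>\<^bsub>M\<^esub> a \<in> \<Union>C" if "a \<in> \<Union>C" for a using that subC submoduleE(3) by blast
      show "a \<odot>\<^bsub>M\<^esub> x \<in> \<Union>C" if "a \<in> carrier R" "x \<in> \<Union>C" for a x using that subC submoduleE(4) by blast
      show "a \<oplus>\<^bsub>M\<^esub> b \<in> \<Union>C" if ab: "a \<in> \<Union>C" "b \<in> \<Union>C" for a b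
      proof -
        obtain A B where "A \<in> C" "B \<in> C" "a \<in> A" "b \<in> B" using ab by auto
        then show ?thesis using ch subC submoduleE(5) by (metis UnionI subsetD)
      qed
    qed
    obtain T where T: "finite T" "T \<subseteq> \<Union>C" "\<Union>C = span R M T"
      using noeth_sub_fg[OF noeth S(1,2) U] S(3) U submoduleE(1) by metis
    obtain X0 where X: "X0 \<in> C" "T \<subseteq> X0" using finite_subset_chain[OF T(1,2) False ch] by auto
    have TM: "T \<subseteq> carrier M" using T(2) U submoduleE(1) by blast
    have "\<Union>C \<subseteq> X0" using T(3) span_least[OF T(1) TM subC[OF X(1)] X(2)] by simp
    then have "\<Union>C = X0" using X by auto
    then show ?thesis using X CS by auto
  qed
qed

lemma colon_ideal:
  assumes N: "submodule N R M" and x: "x \<in> carrier M"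
  shows "ideal (colon R M N x) R"
proof -
  have Iqc: "colon R M N x \<subseteq> carrier R" unfolding colon_def by auto
  have l: "y \<otimes> a \<in> colon R M N x" if "a \<in> colon R M N x" "y \<in> carrier R" for a y
    using that x submoduleE(4)[OF N] by (auto simp: colon_def smult_assoc1)
  have r: "a \<otimes> y \<in> colon R M N x" if "a \<in> colon R M N x" "y \<in> carrier R" for a y
    using l[OF that] that Iqc R.m_comm[of a y] by auto
  have sg: "subgroup (colon R M N x) (add_monoid R)"
  proof (rule R.add.subgroupI)
    show "colon R M N x \<subseteq> carrier R" using Iqc by simp
    show "colon R M N x \<noteq> {}" using x submodule_zero[OF N] unfolding colon_def by (auto intro!: exI[of _ \<zero>])
    show "\<ominus> a \<in> colon R M N x" if "a \<in> colon R M N x" for a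
      using that x submoduleE(3)[OF N] by (auto simp: colon_def smult_l_minus)
    show "a \<oplus> b \<in> colon R M N x" if "a \<in> colon R M N x" "b \<in> colon R M N x" for a b
      using that x submoduleE(5)[OF N] by (auto simp: colon_def smult_l_distr)
  qed
  show ?thesis by (rule idealI[OF R.ring_axioms sg l r])
qed

lemma colon_smult:
  assumes N: "submodule N R M" and x: "x \<in> carrier M" and a: "a \<in> carrier R"
  shows "colon R M N x \<subseteq> colon R M N (a \<odot>\<^bsub>M\<^esub> x)"
proof
  fix b assume "b \<in> colon R M N x"
  then have b: "b \<in> carrier R" "b \<odot>\<^bsub>M\<^esub> x \<in> N" unfolding colon_def by auto
  have "b \<odot>\<^bsub>M\<^esub> (a \<odot>\<^bsub>M\<^esub> x) = a \<odot>\<^bsub>M\<^esub> (b \<odot>\<^bsub>M\<^esub> x)"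
    using a b x by (simp add: smult_assoc1[symmetric] R.m_comm)
  then show "b \<in> colon R M N (a \<odot>\<^bsub>M\<^esub> x)" using b submoduleE(4)[OF N a] unfolding colon_def by auto
qed

lemma colon_smult2:
  assumes x: "x \<in> carrier M" and a: "a \<in> carrier R" and b: "b \<in> carrier R"
  shows "b \<in> colon R M N (a \<odot>\<^bsub>M\<^esub> x) \<longleftrightarrow> b \<otimes> a \<in> colon R M N x"
  using assms by (simp add: colon_def smult_assoc1)

lemma colon_carrier_iff:
  assumes N: "submodule N R M" and x: "x \<in> carrier M"
  shows "\<one> \<in> colon R M N x \<longleftrightarrow> x \<in> N"
  using x by (simp add: colon_def)

lemma max_colon_prime:
  assumes N: "submodule N R M" and x: "x \<in> carrier M" "x \<notin> N"
    and mx: "\<And>a. a \<in> carrier R \<Longrightarrow> a \<odot>\<^bsub>M\<^esub> x \<notin> N \<Longrightarrow> colon R M N (a \<odot>\<^bsub>M\<^esub> x) = colon R M N x"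
  shows "primeideal (colon R M N x) R"
proof (rule primeidealI[OF colon_ideal[OF N x(1)] R.is_cring])
  show "carrier R \<noteq> colon R M N x" using colon_carrier_iff[OF N x(1)] x(2) by auto
next
  fix a b assume a: "a \<in> carrier R" and b: "b \<in> carrier R" and ab: "a \<otimes> b \<in> colon R M N x"
  show "a \<in> colon R M N x \<or> b \<in> colon R M N x"
  proof (cases "a \<in> colon R M N x")
    case False
    then have "a \<odot>\<^bsub>M\<^esub> x \<notin> N" using a unfolding colon_def by auto
    then have eq: "colon R M N (a \<odot>\<^bsub>M\<^esub> x) = colon R M N x" using mx a by auto
    have "b \<otimes> a \<in> colon R M N x" using ab a b R.m_comm by simp
    then have "b \<in> colon R M N (a \<odot>\<^bsub>M\<^esub> x)" using colon_smult2[OF x(1) a b] by simp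
    then show ?thesis using eq by simp
  qed simp
qed

lemma exists_prime_colon:
  assumes noeth: "noetherian_ring R" and N: "submodule N R M" and x: "x \<in> carrier M" "x \<notin> N"
  shows "\<exists>a\<in>carrier R. a \<odot>\<^bsub>M\<^esub> x \<notin> N \<and> colon R M N x \<subseteq> colon R M N (a \<odot>\<^bsub>M\<^esub> x)
           \<and> primeideal (colon R M N (a \<odot>\<^bsub>M\<^esub> x)) R"
proof -
  interpret NR: noetherian_ring R by fact
  define SS where "SS = {colon R M N (a \<odot>\<^bsub>M\<^esub> x) | a. a \<in> carrier R \<and> a \<odot>\<^bsub>M\<^esub> x \<notin> N}"
  have "\<one> \<odot>\<^bsub>M\<^esub> x \<notin> N" using x by simp
  then have ne: "SS \<noteq> {}" unfolding SS_def by blast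
  have id: "ideal Iq R" if "Iq \<in> SS" for Iq using that unfolding SS_def using colon_ideal[OF N] x by auto
  obtain J where J: "J \<in> SS" "\<forall>Iq\<in>SS. J \<subseteq> Iq \<longrightarrow> Iq = J" using NR.noeth_max_ideal[OF ne id] by blast
  then obtain a where a: "a \<in> carrier R" "a \<odot>\<^bsub>M\<^esub> x \<notin> N" "J = colon R M N (a \<odot>\<^bsub>M\<^esub> x)"
    unfolding SS_def by auto
  have y: "a \<odot>\<^bsub>M\<^esub> x \<in> carrier M" using a x by simp
  have "primeideal J R" unfolding a(3)
  proof (rule max_colon_prime[OF N y a(2)])
    fix b assume b: "b \<in> carrier R" "b \<odot>\<^bsub>M\<^esub> (a \<odot>\<^bsub>M\<^esub> x) \<notin> N"
    have e: "b \<odot>\<^bsub>M\<^esub> (a \<odot>\<^bsub>M\<^esub> x) = (b \<otimes> a) \<odot>\<^bsub>M\<^esub> x" using a b x by (simp add: smult_assoc1)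
    then have "colon R M N (b \<odot>\<^bsub>M\<^esub> (a \<odot>\<^bsub>M\<^esub> x)) \<in> SS" unfolding SS_def using a b by auto
    moreover have "J \<subseteq> colon R M N (b \<odot>\<^bsub>M\<^esub> (a \<odot>\<^bsub>M\<^esub> x))" unfolding a(3) using colon_smult[OF N y b(1)] .
    ultimately show "colon R M N (b \<odot>\<^bsub>M\<^esub> (a \<odot>\<^bsub>M\<^esub> x)) = colon R M N (a \<odot>\<^bsub>M\<^esub> x)" using J a(3) by auto
  qed
  then show ?thesis using a colon_smult[OF N x(1) a(1)] by auto
qed

end


context abelian_group begin
lemma diff_add_diff: "x \<in> carrier G \<Longrightarrow> y \<in> carrier G \<Longrightarrow> x' \<in> carrier G \<Longrightarrow> y' \<in> carrier G \<Longrightarrow>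
  (x \<oplus> y) \<ominus> (x' \<oplus> y') = (x \<ominus> x') \<oplus> (y \<ominus> y')"
  by (simp add: a_minus_def minus_add a_ac)
lemma diff_self: "x \<in> carrier G \<Longrightarrow> x \<ominus> x = \<zero>"
  by (simp add: a_minus_def r_neg)
lemma diff_neg: "x \<in> carrier G \<Longrightarrow> y \<in> carrier G \<Longrightarrow> \<ominus> (x \<ominus> y) = y \<ominus> x"
  by (simp add: a_minus_def minus_add a_comm)
lemma diff_trans: "x \<in> carrier G \<Longrightarrow> y \<in> carrier G \<Longrightarrow> z \<in> carrier G \<Longrightarrow> x \<ominus> z = (x \<ominus> y) \<oplus> (y \<ominus> z)"
  by (simp add: a_minus_def a_assoc r_neg1)
lemma diff_zero: "x \<in> carrier G \<Longrightarrow> x \<ominus> \<zero> = x"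
  by (simp add: a_minus_def)
lemma diff_eq0: "x \<in> carrier G \<Longrightarrow> y \<in> carrier G \<Longrightarrow> x \<ominus> y = \<zero> \<longleftrightarrow> x = y"
  by (metis a_minus_def add.inv_closed add.inv_equality minus_minus diff_self r_neg1 a_comm)
end

context module begin
lemma smult_diff: "a \<in> carrier R \<Longrightarrow> x \<in> carrier M \<Longrightarrow> y \<in> carrier M \<Longrightarrow>
  a \<odot>\<^bsub>M\<^esub> x \<ominus>\<^bsub>M\<^esub> a \<odot>\<^bsub>M\<^esub> y = a \<odot>\<^bsub>M\<^esub> (x \<ominus>\<^bsub>M\<^esub> y)"
  by (simp add: a_minus_def smult_r_distr smult_r_minus)
lemma smult_ldiff: "a \<in> carrier R \<Longrightarrow> b \<in> carrier R \<Longrightarrow> x \<in> carrier M \<Longrightarrow>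
  a \<odot>\<^bsub>M\<^esub> x \<ominus>\<^bsub>M\<^esub> b \<odot>\<^bsub>M\<^esub> x = (a \<ominus> b) \<odot>\<^bsub>M\<^esub> x"
  by (simp add: a_minus_def smult_l_distr smult_l_minus)
lemma submodule_diff: "submodule N R M \<Longrightarrow> x \<in> N \<Longrightarrow> y \<in> N \<Longrightarrow> x \<ominus>\<^bsub>M\<^esub> y \<in> N"
  unfolding a_minus_def using submoduleE(3,5) by blast
end


lemma mod_hom_zero:
  assumes M: "module R M" and N: "module R N" and f: "mod_hom R M N f"
  shows "f \<zero>\<^bsub>M\<^esub> = \<zero>\<^bsub>N\<^esub>"
proof -
  interpret M: module R M by fact
  interpret N: module R N by fact
  have "f (\<zero>\<^bsub>R\<^esub> \<odot>\<^bsub>M\<^esub> \<zero>\<^bsub>M\<^esub>) = \<zero>\<^bsub>R\<^esub> \<odot>\<^bsub>N\<^esub> f \<zero>\<^bsub>M\<^esub>" using f unfolding mod_hom_def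
    using M.R.zero_closed M.zero_closed by blast
  moreover have "f \<zero>\<^bsub>M\<^esub> \<in> carrier N" using f unfolding mod_hom_def by auto
  moreover have "\<zero>\<^bsub>R\<^esub> \<odot>\<^bsub>M\<^esub> \<zero>\<^bsub>M\<^esub> = \<zero>\<^bsub>M\<^esub>" by simp
  ultimately show ?thesis by simp
qed

lemma mod_hom_neg:
  assumes M: "module R M" and N: "module R N" and f: "mod_hom R M N f" and x: "x \<in> carrier M"
  shows "f (\<ominus>\<^bsub>M\<^esub> x) = \<ominus>\<^bsub>N\<^esub> f x"
proof -
  interpret M: module R M by fact
  interpret N: module R N by fact
  have fx: "f x \<in> carrier N" using f x unfolding mod_hom_def by auto
  have "f ((\<ominus>\<^bsub>R\<^esub> \<one>\<^bsub>R\<^esub>) \<odot>\<^bsub>M\<^esub> x) = (\<ominus>\<^bsub>R\<^esub> \<one>\<^bsub>R\<^esub>) \<odot>\<^bsub>N\<^esub> f x" using f x unfolding mod_hom_def by auto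
  then show ?thesis using x fx by (simp add: M.smult_l_minus N.smult_l_minus)
qed

lemma mod_hom_diff:
  assumes M: "module R M" and N: "module R N" and f: "mod_hom R M N f" and x: "x \<in> carrier M" and y: "y \<in> carrier M"
  shows "f (x \<ominus>\<^bsub>M\<^esub> y) = f x \<ominus>\<^bsub>N\<^esub> f y"
proof -
  interpret M: module R M by fact
  have "f (x \<oplus>\<^bsub>M\<^esub> \<ominus>\<^bsub>M\<^esub> y) = f x \<oplus>\<^bsub>N\<^esub> f (\<ominus>\<^bsub>M\<^esub> y)" using f x y unfolding mod_hom_def by auto
  then show ?thesis using mod_hom_neg[OF M N f y] by (simp add: a_minus_def)
qed

lemma mod_iso_sym:
  assumes M: "module R M" and N: "module R N" and f: "mod_iso R M N f"
  shows "mod_iso R N M (inv_into (carrier M) f)"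
proof -
  interpret M: module R M by fact
  interpret N: module R N by fact
  define g where "g = inv_into (carrier M) f"
  have bij: "bij_betw f (carrier M) (carrier N)" and h: "mod_hom R M N f" using f unfolding mod_iso_def by auto
  have inj: "inj_on f (carrier M)" using bij bij_betw_def by auto
  have bg: "bij_betw g (carrier N) (carrier M)" unfolding g_def using bij_betw_inv_into[OF bij] .
  have gc: "g u \<in> carrier M" if "u \<in> carrier N" for u using bg that bij_betwE by blast
  have fg: "f (g u) = u" if "u \<in> carrier N" for u
    unfolding g_def using bij that by (simp add: bij_betw_def f_inv_into_f)
  have gf: "g (f x) = x" if "x \<in> carrier M" for x
    unfolding g_def using inj that by (simp add: inv_into_f_f)
  have "mod_hom R N M g"
    unfolding mod_hom_def
  proof (intro conjI ballI)
    show "g \<in> carrier N \<rightarrow> carrier M" using gc by auto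
    fix u v assume u: "u \<in> carrier N" and v: "v \<in> carrier N"
    have e: "f (g u \<oplus>\<^bsub>M\<^esub> g v) = u \<oplus>\<^bsub>N\<^esub> v" using h gc u v fg unfolding mod_hom_def by auto
    have c: "g u \<oplus>\<^bsub>M\<^esub> g v \<in> carrier M" using gc u v by simp
    have "g (u \<oplus>\<^bsub>N\<^esub> v) = g (f (g u \<oplus>\<^bsub>M\<^esub> g v))" using e by simp
    also have "\<dots> = g u \<oplus>\<^bsub>M\<^esub> g v" using gf[OF c] .
    finally show "g (u \<oplus>\<^bsub>N\<^esub> v) = g u \<oplus>\<^bsub>M\<^esub> g v" .
  next
    fix a u assume a: "a \<in> carrier R" and u: "u \<in> carrier N"
    have e: "f (a \<odot>\<^bsub>M\<^esub> g u) = a \<odot>\<^bsub>N\<^esub> u" using h gc u a fg unfolding mod_hom_def by auto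
    have c: "a \<odot>\<^bsub>M\<^esub> g u \<in> carrier M" using gc u a by simp
    have "g (a \<odot>\<^bsub>N\<^esub> u) = g (f (a \<odot>\<^bsub>M\<^esub> g u))" using e by simp
    also have "\<dots> = a \<odot>\<^bsub>M\<^esub> g u" using gf[OF c] .
    finally show "g (a \<odot>\<^bsub>N\<^esub> u) = a \<odot>\<^bsub>M\<^esub> g u" .
  qed
  then show ?thesis using bg unfolding mod_iso_def g_def by auto
qed

lemma Ass_colon: "Ass R M = {P. primeideal P R \<and> (\<exists>x\<in>carrier M. P = colon R M {\<zero>\<^bsub>M\<^esub>} x)}"
  by (simp add: Ass_def colon_def)

lemma Ass_sub: "Ass R (M\<lparr>carrier := H\<rparr>) = {P. primeideal P R \<and> (\<exists>x\<in>H. P = colon R M {\<zero>\<^bsub>M\<^esub>} x)}"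
  by (simp add: Ass_def colon_def)

lemma colon_sub[simp]: "colon R (M\<lparr>carrier := H\<rparr>) N x = colon R M N x"
  by (simp add: colon_def)

lemma carrier_update_self[simp]: "M\<lparr>carrier := carrier M\<rparr> = M"
  by simp

lemma ass_exists:
  assumes M: "module R M" and noeth: "noetherian_ring R" and z: "z \<in> carrier M" "z \<noteq> \<zero>\<^bsub>M\<^esub>"
  shows "\<exists>P\<in>Ass R M. colon R M {\<zero>\<^bsub>M\<^esub>} z \<subseteq> P"
proof -
  interpret module R M by fact
  obtain a where a: "a \<in> carrier R" "a \<odot>\<^bsub>M\<^esub> z \<notin> {\<zero>\<^bsub>M\<^esub>}"
    "colon R M {\<zero>\<^bsub>M\<^esub>} z \<subseteq> colon R M {\<zero>\<^bsub>M\<^esub>} (a \<odot>\<^bsub>M\<^esub> z)"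
    "primeideal (colon R M {\<zero>\<^bsub>M\<^esub>} (a \<odot>\<^bsub>M\<^esub> z)) R"
    using exists_prime_colon[OF noeth zero_submodule z(1)] z(2) by auto
  then show ?thesis unfolding Ass_colon using z(1) by (auto intro!: bexI[of _ "a \<odot>\<^bsub>M\<^esub> z"])
qed

lemma Ass_empty:
  assumes M: "module R M" and noeth: "noetherian_ring R" and e: "Ass R M = {}"
  shows "carrier M = {\<zero>\<^bsub>M\<^esub>}"
proof -
  interpret module R M by fact
  show ?thesis using ass_exists[OF M noeth] e by auto
qed

lemma colon_zero_not_prime:
  assumes M: "module R M" and N: "submodule N R M" and x: "x \<in> N"
  shows "\<not> primeideal (colon R M N x) R"
proof -
  interpret module R M by fact
  have "x \<in> carrier M" using x submoduleE(1)[OF N] by auto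
  then have "colon R M N x = carrier R" using x submoduleE(4)[OF N] unfolding colon_def by auto
  then show ?thesis using primeideal.I_notcarr by metis
qed

lemma Ass_zero_sub: assumes M: "module R M" shows "Ass R (M\<lparr>carrier := {\<zero>\<^bsub>M\<^esub>}\<rparr>) = {}"
  using colon_zero_not_prime[OF M module.zero_submodule[OF M]] unfolding Ass_sub by auto

lemma colon_prime_mult:
  assumes M: "module R M" and N: "submodule N R M" and z: "z \<in> carrier M"
    and P: "primeideal (colon R M N z) R" and c: "c \<in> carrier R" "c \<notin> colon R M N z"
  shows "colon R M N (c \<odot>\<^bsub>M\<^esub> z) = colon R M N z"
proof
  interpret module R M by fact
  show "colon R M N z \<subseteq> colon R M N (c \<odot>\<^bsub>M\<^esub> z)" using colon_smult[OF N z c(1)] .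
  show "colon R M N (c \<odot>\<^bsub>M\<^esub> z) \<subseteq> colon R M N z"
  proof
    fix d assume d: "d \<in> colon R M N (c \<odot>\<^bsub>M\<^esub> z)"
    then have dR: "d \<in> carrier R" unfolding colon_def by auto
    then have "d \<otimes>\<^bsub>R\<^esub> c \<in> colon R M N z" using colon_smult2[OF z c(1) dR] d by simp
    then show "d \<in> colon R M N z" using primeideal.I_prime[OF P dR c(1)] c(2) by auto
  qed
qed

lemma ass_sub_split:
  assumes M: "module R M" and N: "submodule N R M" and H: "submodule H R M" and NH: "N \<subseteq> H"
    and P: "P \<in> Ass R (M\<lparr>carrier := H\<rparr>)"
  shows "P \<in> Ass R (M\<lparr>carrier := N\<rparr>) \<or> (\<exists>z\<in>H. P = colon R M N z)"
proof -
  interpret module R M by fact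
  obtain z where z: "z \<in> H" "P = colon R M {\<zero>\<^bsub>M\<^esub>} z" and Pp: "primeideal P R"
    using P unfolding Ass_sub by auto
  have zM: "z \<in> carrier M" using z submoduleE(1)[OF H] by auto
  show ?thesis
  proof (cases "\<exists>c\<in>carrier R. c \<notin> P \<and> c \<odot>\<^bsub>M\<^esub> z \<in> N")
    case True
    then obtain c where c: "c \<in> carrier R" "c \<notin> P" "c \<odot>\<^bsub>M\<^esub> z \<in> N" by auto
    have "colon R M {\<zero>\<^bsub>M\<^esub>} (c \<odot>\<^bsub>M\<^esub> z) = P"
      using colon_prime_mult[OF M zero_submodule zM _ c(1)] z Pp c by auto
    then have "P \<in> Ass R (M\<lparr>carrier := N\<rparr>)" unfolding Ass_sub using Pp c(3) by auto
    then show ?thesis by simp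
  next
    case False
    have "colon R M N z = P"
    proof
      show "P \<subseteq> colon R M N z" using z submodule_zero[OF N] unfolding colon_def by auto
      show "colon R M N z \<subseteq> P" using False unfolding colon_def by auto
    qed
    then show ?thesis using z by auto
  qed
qed

lemma ass_short_exact:
  assumes L: "module R L" and M: "module R M" and N: "module R N" and se: "short_exact R L M N f g"
  shows "Ass R M \<subseteq> Ass R L \<union> Ass R N"
proof
  interpret L: module R L by fact
  interpret M: module R M by fact
  interpret N: module R N by fact
  have fh: "mod_hom R L M f" and fi: "inj_on f (carrier L)" and gh: "mod_hom R M N g"
    and gs: "g ` carrier M = carrier N" and ker: "f ` carrier L = {x \<in> carrier M. g x = \<zero>\<^bsub>N\<^esub>}"
    using se unfolding short_exact_def by auto
  fix P assume "P \<in> Ass R M"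
  then obtain z where z: "z \<in> carrier M" "P = colon R M {\<zero>\<^bsub>M\<^esub>} z" and Pp: "primeideal P R"
    unfolding Ass_colon by auto
  show "P \<in> Ass R L \<union> Ass R N"
  proof (cases "\<exists>c\<in>carrier R. c \<notin> P \<and> g (c \<odot>\<^bsub>M\<^esub> z) = \<zero>\<^bsub>N\<^esub>")
    case True
    then obtain c where c: "c \<in> carrier R" "c \<notin> P" "g (c \<odot>\<^bsub>M\<^esub> z) = \<zero>\<^bsub>N\<^esub>" by auto
    have "c \<odot>\<^bsub>M\<^esub> z \<in> f ` carrier L" using ker c z by auto
    then obtain l where l: "l \<in> carrier L" "f l = c \<odot>\<^bsub>M\<^esub> z" by auto
    have cP: "colon R M {\<zero>\<^bsub>M\<^esub>} (c \<odot>\<^bsub>M\<^esub> z) = P"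
      using colon_prime_mult[OF M M.zero_submodule z(1) _ c(1)] z Pp c by auto
    have "colon R L {\<zero>\<^bsub>L\<^esub>} l = colon R M {\<zero>\<^bsub>M\<^esub>} (f l)"
    proof -
      have "a \<odot>\<^bsub>L\<^esub> l = \<zero>\<^bsub>L\<^esub> \<longleftrightarrow> a \<odot>\<^bsub>M\<^esub> f l = \<zero>\<^bsub>M\<^esub>" if a: "a \<in> carrier R" for a
      proof -
        have e1: "f (a \<odot>\<^bsub>L\<^esub> l) = a \<odot>\<^bsub>M\<^esub> f l" using fh a l unfolding mod_hom_def by auto
        have e2: "f \<zero>\<^bsub>L\<^esub> = \<zero>\<^bsub>M\<^esub>" using mod_hom_zero[OF L M fh] .
        have al: "a \<odot>\<^bsub>L\<^esub> l \<in> carrier L" using a l by simp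
        show ?thesis
        proof
          assume "a \<odot>\<^bsub>L\<^esub> l = \<zero>\<^bsub>L\<^esub>" then show "a \<odot>\<^bsub>M\<^esub> f l = \<zero>\<^bsub>M\<^esub>" using e1 e2 by simp
        next
          assume "a \<odot>\<^bsub>M\<^esub> f l = \<zero>\<^bsub>M\<^esub>" then have "f (a \<odot>\<^bsub>L\<^esub> l) = f \<zero>\<^bsub>L\<^esub>" using e1 e2 by simp
          then show "a \<odot>\<^bsub>L\<^esub> l = \<zero>\<^bsub>L\<^esub>" using inj_onD[OF fi] al L.zero_closed by blast
        qed
      qed
      then show ?thesis unfolding colon_def by auto
    qed
    then have "P \<in> Ass R L" unfolding Ass_colon using Pp l cP by auto
    then show ?thesis by simp
  next
    case False
    have gz: "g z \<in> carrier N" using gh z unfolding mod_hom_def by auto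
    have "colon R N {\<zero>\<^bsub>N\<^esub>} (g z) = P"
    proof
      show "P \<subseteq> colon R N {\<zero>\<^bsub>N\<^esub>} (g z)"
      proof
        fix a assume "a \<in> P"
        then have a: "a \<in> carrier R" "a \<odot>\<^bsub>M\<^esub> z = \<zero>\<^bsub>M\<^esub>" using z unfolding colon_def by auto
        have "g (a \<odot>\<^bsub>M\<^esub> z) = a \<odot>\<^bsub>N\<^esub> g z" using gh a(1) z(1) unfolding mod_hom_def by blast
        then show "a \<in> colon R N {\<zero>\<^bsub>N\<^esub>} (g z)" using a mod_hom_zero[OF M N gh] unfolding colon_def by auto
      qed
      show "colon R N {\<zero>\<^bsub>N\<^esub>} (g z) \<subseteq> P"
      proof
        fix a assume "a \<in> colon R N {\<zero>\<^bsub>N\<^esub>} (g z)"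
        then have a: "a \<in> carrier R" "a \<odot>\<^bsub>N\<^esub> g z = \<zero>\<^bsub>N\<^esub>" unfolding colon_def by auto
        have "g (a \<odot>\<^bsub>M\<^esub> z) = a \<odot>\<^bsub>N\<^esub> g z" using gh a(1) z(1) unfolding mod_hom_def by blast
        then show "a \<in> P" using False a by auto
      qed
    qed
    then have "P \<in> Ass R N" unfolding Ass_colon using Pp gz by auto
    then show ?thesis by simp
  qed
qed

lemma ass_iso:
  assumes M: "module R M" and N: "module R N" and f: "mod_iso R M N f"
  shows "Ass R N = Ass R M"
proof -
  interpret M: module R M by fact
  interpret N: module R N by fact
  have fh: "mod_hom R M N f" and bij: "bij_betw f (carrier M) (carrier N)" using f unfolding mod_iso_def by auto
  have inj: "inj_on f (carrier M)" and im: "f ` carrier M = carrier N" using bij unfolding bij_betw_def by auto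
  have eq: "colon R N {\<zero>\<^bsub>N\<^esub>} (f x) = colon R M {\<zero>\<^bsub>M\<^esub>} x" if x: "x \<in> carrier M" for x
  proof -
    have "a \<odot>\<^bsub>M\<^esub> x = \<zero>\<^bsub>M\<^esub> \<longleftrightarrow> a \<odot>\<^bsub>N\<^esub> f x = \<zero>\<^bsub>N\<^esub>" if a: "a \<in> carrier R" for a
    proof -
      have e1: "f (a \<odot>\<^bsub>M\<^esub> x) = a \<odot>\<^bsub>N\<^esub> f x" using fh a x unfolding mod_hom_def by auto
      have e2: "f \<zero>\<^bsub>M\<^esub> = \<zero>\<^bsub>N\<^esub>" using mod_hom_zero[OF M N fh] .
      have al: "a \<odot>\<^bsub>M\<^esub> x \<in> carrier M" using a x by simp
      show ?thesis
      proof
        assume "a \<odot>\<^bsub>M\<^esub> x = \<zero>\<^bsub>M\<^esub>" then show "a \<odot>\<^bsub>N\<^esub> f x = \<zero>\<^bsub>N\<^esub>" using e1 e2 by simp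
      next
        assume "a \<odot>\<^bsub>N\<^esub> f x = \<zero>\<^bsub>N\<^esub>" then have "f (a \<odot>\<^bsub>M\<^esub> x) = f \<zero>\<^bsub>M\<^esub>" using e1 e2 by simp
        then show "a \<odot>\<^bsub>M\<^esub> x = \<zero>\<^bsub>M\<^esub>" using inj_onD[OF inj] al M.zero_closed by blast
      qed
    qed
    then show ?thesis unfolding colon_def by auto
  qed
  show ?thesis
  proof
    show "Ass R N \<subseteq> Ass R M"
    proof
      fix P assume "P \<in> Ass R N"
      then obtain u where u: "u \<in> carrier N" "P = colon R N {\<zero>\<^bsub>N\<^esub>} u" and Pp: "primeideal P R"
        unfolding Ass_colon by auto
      obtain x where x: "x \<in> carrier M" "u = f x" using u(1) im by auto
      show "P \<in> Ass R M" unfolding Ass_colon using Pp x u eq by auto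
    qed
    show "Ass R M \<subseteq> Ass R N" unfolding Ass_colon using eq im by (auto intro!: bexI)
  qed
qed

definition scyc :: "('a,'c) ring_scheme \<Rightarrow> ('a,'b) module \<Rightarrow> 'b set \<Rightarrow> 'b \<Rightarrow> 'b set" where
  "scyc R M N y = {n \<oplus>\<^bsub>M\<^esub> a \<odot>\<^bsub>M\<^esub> y | n a. n \<in> N \<and> a \<in> carrier R}"

lemma scyc_submodule:
  assumes M: "module R M" and N: "submodule N R M" and y: "y \<in> carrier M"
  shows "submodule (scyc R M N y) R M" "N \<subseteq> scyc R M N y" "y \<in> scyc R M N y"
proof -
  interpret module R M by fact
  have NM: "N \<subseteq> carrier M" using submoduleE(1)[OF N] .
  show "submodule (scyc R M N y) R M"
  proof (rule submoduleI)
    show "scyc R M N y \<subseteq> carrier M" unfolding scyc_def using NM y by auto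
    have "\<zero>\<^bsub>M\<^esub> = \<zero>\<^bsub>M\<^esub> \<oplus>\<^bsub>M\<^esub> \<zero>\<^bsub>R\<^esub> \<odot>\<^bsub>M\<^esub> y" using y by simp
    then show "\<zero>\<^bsub>M\<^esub> \<in> scyc R M N y" unfolding scyc_def using submodule_zero[OF N] by blast
  next
    fix x assume "x \<in> scyc R M N y"
    then obtain k a where k: "k \<in> N" and a: "a \<in> carrier R" and x: "x = k \<oplus>\<^bsub>M\<^esub> a \<odot>\<^bsub>M\<^esub> y" unfolding scyc_def by auto
    have kM: "k \<in> carrier M" using k NM by auto
    have "\<ominus>\<^bsub>M\<^esub> x = \<ominus>\<^bsub>M\<^esub> k \<oplus>\<^bsub>M\<^esub> (\<ominus>\<^bsub>R\<^esub> a) \<odot>\<^bsub>M\<^esub> y"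
      using kM a y by (simp add: x smult_l_minus M.minus_add M.a_comm)
    then show "\<ominus>\<^bsub>M\<^esub> x \<in> scyc R M N y" unfolding scyc_def using submoduleE(3)[OF N k] a by blast
  next
    fix x z assume "x \<in> scyc R M N y" "z \<in> scyc R M N y"
    then obtain k a k' a' where k: "k \<in> N" and a: "a \<in> carrier R" and x: "x = k \<oplus>\<^bsub>M\<^esub> a \<odot>\<^bsub>M\<^esub> y"
      and k': "k' \<in> N" and a': "a' \<in> carrier R" and z: "z = k' \<oplus>\<^bsub>M\<^esub> a' \<odot>\<^bsub>M\<^esub> y" unfolding scyc_def by blast
    have kM: "k \<in> carrier M" "k' \<in> carrier M" using k k' NM by auto
    have "x \<oplus>\<^bsub>M\<^esub> z = (k \<oplus>\<^bsub>M\<^esub> k') \<oplus>\<^bsub>M\<^esub> (a \<oplus>\<^bsub>R\<^esub> a') \<odot>\<^bsub>M\<^esub> y"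
      using kM a a' y by (simp add: x z smult_l_distr M.a_ac)
    then show "x \<oplus>\<^bsub>M\<^esub> z \<in> scyc R M N y" unfolding scyc_def using submoduleE(5)[OF N k k'] a a' by blast
  next
    fix b x assume b: "b \<in> carrier R" and "x \<in> scyc R M N y"
    then obtain k a where k: "k \<in> N" and a: "a \<in> carrier R" and x: "x = k \<oplus>\<^bsub>M\<^esub> a \<odot>\<^bsub>M\<^esub> y" unfolding scyc_def by auto
    have kM: "k \<in> carrier M" using k NM by auto
    have "b \<odot>\<^bsub>M\<^esub> x = b \<odot>\<^bsub>M\<^esub> k \<oplus>\<^bsub>M\<^esub> (b \<otimes>\<^bsub>R\<^esub> a) \<odot>\<^bsub>M\<^esub> y"
      using kM a b y by (simp add: x smult_r_distr smult_assoc1)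
    then show "b \<odot>\<^bsub>M\<^esub> x \<in> scyc R M N y" unfolding scyc_def using submoduleE(4)[OF N b k] a b by blast
  qed
  show "N \<subseteq> scyc R M N y"
  proof
    fix n assume n: "n \<in> N"
    have "n = n \<oplus>\<^bsub>M\<^esub> \<zero>\<^bsub>R\<^esub> \<odot>\<^bsub>M\<^esub> y" using n NM y by auto
    then show "n \<in> scyc R M N y" unfolding scyc_def using n by blast
  qed
  have "y = \<zero>\<^bsub>M\<^esub> \<oplus>\<^bsub>M\<^esub> \<one>\<^bsub>R\<^esub> \<odot>\<^bsub>M\<^esub> y" using y by simp
  then show "y \<in> scyc R M N y" unfolding scyc_def using submodule_zero[OF N] by blast
qed

lemma colon_shift:
  assumes M: "module R M" and N: "submodule N R M" and n: "n \<in> N" and z: "z \<in> carrier M"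
  shows "colon R M N (n \<oplus>\<^bsub>M\<^esub> z) = colon R M N z"
proof -
  interpret module R M by fact
  have nM: "n \<in> carrier M" using n submoduleE(1)[OF N] by auto
  have "a \<odot>\<^bsub>M\<^esub> (n \<oplus>\<^bsub>M\<^esub> z) \<in> N \<longleftrightarrow> a \<odot>\<^bsub>M\<^esub> z \<in> N" if a: "a \<in> carrier R" for a
  proof -
    have e: "a \<odot>\<^bsub>M\<^esub> (n \<oplus>\<^bsub>M\<^esub> z) = a \<odot>\<^bsub>M\<^esub> n \<oplus>\<^bsub>M\<^esub> a \<odot>\<^bsub>M\<^esub> z" using a nM z by (simp add: smult_r_distr)
    have an: "a \<odot>\<^bsub>M\<^esub> n \<in> N" using submoduleE(4)[OF N a n] .
    have "a \<odot>\<^bsub>M\<^esub> z = \<ominus>\<^bsub>M\<^esub> (a \<odot>\<^bsub>M\<^esub> n) \<oplus>\<^bsub>M\<^esub> (a \<odot>\<^bsub>M\<^esub> n \<oplus>\<^bsub>M\<^esub> a \<odot>\<^bsub>M\<^esub> z)"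
      using a nM z by (simp add: M.r_neg1)
    show ?thesis
    proof
      assume "a \<odot>\<^bsub>M\<^esub> (n \<oplus>\<^bsub>M\<^esub> z) \<in> N"
      then have "a \<odot>\<^bsub>M\<^esub> n \<oplus>\<^bsub>M\<^esub> a \<odot>\<^bsub>M\<^esub> z \<in> N" using e by simp
      moreover have "\<ominus>\<^bsub>M\<^esub> (a \<odot>\<^bsub>M\<^esub> n) \<in> N" using submoduleE(3)[OF N an] .
      ultimately show "a \<odot>\<^bsub>M\<^esub> z \<in> N" using submoduleE(5)[OF N] \<open>a \<odot>\<^bsub>M\<^esub> z = _\<close> by metis
    next
      assume "a \<odot>\<^bsub>M\<^esub> z \<in> N"
      then show "a \<odot>\<^bsub>M\<^esub> (n \<oplus>\<^bsub>M\<^esub> z) \<in> N" using e an submoduleE(5)[OF N] by simp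
    qed
  qed
  then show ?thesis unfolding colon_def by auto
qed

lemma ass_scyc:
  assumes M: "module R M" and N: "submodule N R M" and y: "y \<in> carrier M"
    and q: "primeideal (colon R M N y) R"
  shows "Ass R (M\<lparr>carrier := scyc R M N y\<rparr>) \<subseteq> Ass R (M\<lparr>carrier := N\<rparr>) \<union> {colon R M N y}"
proof
  interpret module R M by fact
  note S = scyc_submodule[OF M N y]
  fix P assume P: "P \<in> Ass R (M\<lparr>carrier := scyc R M N y\<rparr>)"
  then have Pp: "primeideal P R" unfolding Ass_sub by auto
  from ass_sub_split[OF M N S(1) S(2) P]
  show "P \<in> Ass R (M\<lparr>carrier := N\<rparr>) \<union> {colon R M N y}"
  proof
    assume "\<exists>z\<in>scyc R M N y. P = colon R M N z"
    then obtain n b where n: "n \<in> N" and b: "b \<in> carrier R" and P': "P = colon R M N (n \<oplus>\<^bsub>M\<^esub> b \<odot>\<^bsub>M\<^esub> y)"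
      unfolding scyc_def by auto
    have P2: "P = colon R M N (b \<odot>\<^bsub>M\<^esub> y)" using P' colon_shift[OF M N n] b y by simp
    have "b \<notin> colon R M N y"
    proof
      assume "b \<in> colon R M N y"
      then have "b \<odot>\<^bsub>M\<^esub> y \<in> N" unfolding colon_def by auto
      then have "\<not> primeideal (colon R M N (b \<odot>\<^bsub>M\<^esub> y)) R" using colon_zero_not_prime[OF M N] by blast
      then show False using P2 Pp by simp
    qed
    then have "P = colon R M N y" using P2 colon_prime_mult[OF M N y q b] by simp
    then show ?thesis by simp
  qed simp
qed

lemma ass_finite:
  assumes M: "module R M" and noeth: "noetherian_ring R" and fg: "fg_module R M"
  shows "finite (Ass R M)"
proof -
  interpret module R M by fact
  obtain S where S: "finite S" "S \<subseteq> carrier M" "carrier M = span R M S" using fg unfolding fg_module_span by auto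
  define SS where "SS = {N. submodule N R M \<and> finite (Ass R (M\<lparr>carrier := N\<rparr>))}"
  have "{\<zero>\<^bsub>M\<^esub>} \<in> SS" unfolding SS_def using zero_submodule Ass_zero_sub[OF M] by auto
  then have ne: "SS \<noteq> {}" by auto
  obtain N where N: "N \<in> SS" "\<forall>W\<in>SS. N \<subseteq> W \<longrightarrow> W = N"
    using noeth_max_submodule[OF noeth S ne] unfolding SS_def by blast
  have Ns: "submodule N R M" and Nf: "finite (Ass R (M\<lparr>carrier := N\<rparr>))" using N(1) unfolding SS_def by auto
  have "N = carrier M"
  proof (rule ccontr)
    assume "N \<noteq> carrier M"
    then obtain x where x: "x \<in> carrier M" "x \<notin> N" using submoduleE(1)[OF Ns] by auto
    obtain a where a: "a \<in> carrier R" "a \<odot>\<^bsub>M\<^esub> x \<notin> N" "primeideal (colon R M N (a \<odot>\<^bsub>M\<^esub> x)) R"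
      using exists_prime_colon[OF noeth Ns x] by auto
    define y where "y = a \<odot>\<^bsub>M\<^esub> x"
    have y: "y \<in> carrier M" using a x unfolding y_def by simp
    note S2 = scyc_submodule[OF M Ns y]
    have "finite (Ass R (M\<lparr>carrier := N\<rparr>) \<union> {colon R M N y})" using Nf by simp
    then have "finite (Ass R (M\<lparr>carrier := scyc R M N y\<rparr>))"
      using ass_scyc[OF M Ns y a(3)[folded y_def]] finite_subset by blast
    then have "scyc R M N y \<in> SS" unfolding SS_def using S2(1) by auto
    then have "scyc R M N y = N" using N(2) S2(2) by auto
    then show False using S2(3) a(2) unfolding y_def by auto
  qed
  then show ?thesis using Nf by simp
qed

lemma fg_image:
  assumes M: "module R M" and N: "module R N" and f: "mod_hom R M N f" and s: "f ` carrier M = carrier N"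
    and fg: "fg_module R M"
  shows "fg_module R N"
proof -
  interpret M: module R M by fact
  interpret N: module R N by fact
  obtain S where S: "finite S" "S \<subseteq> carrier M" "carrier M = span R M S" using fg unfolding fg_module_span by auto
  have fS: "finite (f ` S)" "f ` S \<subseteq> carrier N" using S s by auto
  note spN = N.span_submodule[OF fS]
  define Pre where "Pre = {x \<in> carrier M. f x \<in> span R N (f ` S)}"
  have fc: "f x \<in> carrier N" if "x \<in> carrier M" for x using f that unfolding mod_hom_def by auto
  have "submodule Pre R M"
  proof (rule M.submoduleI)
    show "Pre \<subseteq> carrier M" unfolding Pre_def by auto
    show "\<zero>\<^bsub>M\<^esub> \<in> Pre" unfolding Pre_def using mod_hom_zero[OF M N f] N.submodule_zero[OF spN] by auto
    show "\<ominus>\<^bsub>M\<^esub> a \<in> Pre" if "a \<in> Pre" for a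
      using that mod_hom_neg[OF M N f] N.submoduleE(3)[OF spN] unfolding Pre_def by auto
    show "a \<oplus>\<^bsub>M\<^esub> b \<in> Pre" if "a \<in> Pre" "b \<in> Pre" for a b
      using that f N.submoduleE(5)[OF spN] unfolding Pre_def mod_hom_def by auto
    show "a \<odot>\<^bsub>M\<^esub> x \<in> Pre" if "a \<in> carrier R" "x \<in> Pre" for a x
      using that f N.submoduleE(4)[OF spN] unfolding Pre_def mod_hom_def by auto
  qed
  moreover have "S \<subseteq> Pre" unfolding Pre_def using S(2) N.span_incl[OF fS] by auto
  ultimately have "span R M S \<subseteq> Pre" using M.span_least[OF S(1,2)] by auto
  then have CP: "carrier M \<subseteq> Pre" using S(3) by simp
  have "carrier N \<subseteq> span R N (f ` S)"
  proof
    fix u assume "u \<in> carrier N"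
    then obtain x where x: "x \<in> carrier M" "u = f x" using s by auto
    then show "u \<in> span R N (f ` S)" using CP unfolding Pre_def by auto
  qed
  then have "carrier N = span R N (f ` S)" using N.span_closed[OF fS] by auto
  then show ?thesis unfolding fg_module_span using fS by auto
qed



definition pre :: "('b \<Rightarrow> 'c) \<Rightarrow> ('a,'b) module \<Rightarrow> 'c \<Rightarrow> 'b" where
  "pre \<phi> M u = (SOME x. x \<in> carrier M \<and> \<phi> x = u)"

definition imgmod :: "('b \<Rightarrow> 'c) \<Rightarrow> ('a,'b) module \<Rightarrow> ('a,'c) module" where
  "imgmod \<phi> M = \<lparr>carrier = \<phi> ` carrier M,
     monoid.mult = (\<lambda>u v. \<phi> (pre \<phi> M u \<otimes>\<^bsub>M\<^esub> pre \<phi> M v)), one = \<phi> \<one>\<^bsub>M\<^esub>,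
     ring.zero = \<phi> \<zero>\<^bsub>M\<^esub>, ring.add = (\<lambda>u v. \<phi> (pre \<phi> M u \<oplus>\<^bsub>M\<^esub> pre \<phi> M v)),
     smult = (\<lambda>a u. \<phi> (a \<odot>\<^bsub>M\<^esub> pre \<phi> M u))\<rparr>"

lemma imgmod_carrier[simp]: "carrier (imgmod \<phi> M) = \<phi> ` carrier M"
  and imgmod_zero[simp]: "\<zero>\<^bsub>imgmod \<phi> M\<^esub> = \<phi> \<zero>\<^bsub>M\<^esub>"
  by (simp_all add: imgmod_def)

lemma imgmod_add_def: "u \<oplus>\<^bsub>imgmod \<phi> M\<^esub> v = \<phi> (pre \<phi> M u \<oplus>\<^bsub>M\<^esub> pre \<phi> M v)"
  and imgmod_smult_def: "a \<odot>\<^bsub>imgmod \<phi> M\<^esub> u = \<phi> (a \<odot>\<^bsub>M\<^esub> pre \<phi> M u)"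
  by (simp_all add: imgmod_def)

locale imgctx = module R M for R :: "('a,'c) ring_scheme" and M :: "('a,'b) module" +
  fixes N :: "'b set" and \<phi> :: "'b \<Rightarrow> 'd"
  assumes N: "submodule N R M"
    and eq: "\<And>x y. x \<in> carrier M \<Longrightarrow> y \<in> carrier M \<Longrightarrow> \<phi> x = \<phi> y \<longleftrightarrow> x \<ominus>\<^bsub>M\<^esub> y \<in> N"
begin

lemma pre_in: "x \<in> carrier M \<Longrightarrow> pre \<phi> M (\<phi> x) \<in> carrier M \<and> \<phi> (pre \<phi> M (\<phi> x)) = \<phi> x"
  unfolding pre_def by (rule someI[of _ x]) auto

lemma pre_diff: "x \<in> carrier M \<Longrightarrow> pre \<phi> M (\<phi> x) \<ominus>\<^bsub>M\<^esub> x \<in> N"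
  using pre_in eq by blast

lemma Iadd[simp]: "x \<in> carrier M \<Longrightarrow> y \<in> carrier M \<Longrightarrow> \<phi> x \<oplus>\<^bsub>imgmod \<phi> M\<^esub> \<phi> y = \<phi> (x \<oplus>\<^bsub>M\<^esub> y)"
proof -
  assume x: "x \<in> carrier M" and y: "y \<in> carrier M"
  let ?p = "pre \<phi> M (\<phi> x)" and ?q = "pre \<phi> M (\<phi> y)"
  have p: "?p \<in> carrier M" "?q \<in> carrier M" using pre_in x y by auto
  have "(?p \<oplus>\<^bsub>M\<^esub> ?q) \<ominus>\<^bsub>M\<^esub> (x \<oplus>\<^bsub>M\<^esub> y) = (?p \<ominus>\<^bsub>M\<^esub> x) \<oplus>\<^bsub>M\<^esub> (?q \<ominus>\<^bsub>M\<^esub> y)"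
    using p x y by (simp add: M.diff_add_diff)
  then have "(?p \<oplus>\<^bsub>M\<^esub> ?q) \<ominus>\<^bsub>M\<^esub> (x \<oplus>\<^bsub>M\<^esub> y) \<in> N" using pre_diff x y submoduleE(5)[OF N] by simp
  then show ?thesis unfolding imgmod_add_def using eq p x y by simp
qed

lemma Ismult[simp]: "a \<in> carrier R \<Longrightarrow> x \<in> carrier M \<Longrightarrow> a \<odot>\<^bsub>imgmod \<phi> M\<^esub> \<phi> x = \<phi> (a \<odot>\<^bsub>M\<^esub> x)"
proof -
  assume a: "a \<in> carrier R" and x: "x \<in> carrier M"
  let ?p = "pre \<phi> M (\<phi> x)"
  have p: "?p \<in> carrier M" using pre_in x by auto
  have "a \<odot>\<^bsub>M\<^esub> ?p \<ominus>\<^bsub>M\<^esub> a \<odot>\<^bsub>M\<^esub> x = a \<odot>\<^bsub>M\<^esub> (?p \<ominus>\<^bsub>M\<^esub> x)" using a p x by (simp add: smult_diff)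
  then have "a \<odot>\<^bsub>M\<^esub> ?p \<ominus>\<^bsub>M\<^esub> a \<odot>\<^bsub>M\<^esub> x \<in> N" using pre_diff x submoduleE(4)[OF N a] by simp
  then show ?thesis unfolding imgmod_smult_def using eq p x a by simp
qed

lemma img_module: "module R (imgmod \<phi> M)"
proof -
  let ?I = "imgmod \<phi> M"
  have ag: "abelian_group ?I"
  proof (rule abelian_groupI)
    fix u v assume u: "u \<in> carrier ?I" and v: "v \<in> carrier ?I"
    obtain x y where "x \<in> carrier M" "y \<in> carrier M" "u = \<phi> x" "v = \<phi> y" using u v by auto
    then show "u \<oplus>\<^bsub>?I\<^esub> v \<in> carrier ?I" by simp
  next
    show "\<zero>\<^bsub>?I\<^esub> \<in> carrier ?I" by simp
  next
    fix u v w assume u: "u \<in> carrier ?I" and v: "v \<in> carrier ?I" and w: "w \<in> carrier ?I"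
    obtain x y z where "x \<in> carrier M" "y \<in> carrier M" "z \<in> carrier M" "u = \<phi> x" "v = \<phi> y" "w = \<phi> z"
      using u v w by auto
    then show "u \<oplus>\<^bsub>?I\<^esub> v \<oplus>\<^bsub>?I\<^esub> w = u \<oplus>\<^bsub>?I\<^esub> (v \<oplus>\<^bsub>?I\<^esub> w)"
      by (simp add: M.a_assoc)
  next
    fix u v assume u: "u \<in> carrier ?I" and v: "v \<in> carrier ?I"
    obtain x y where "x \<in> carrier M" "y \<in> carrier M" "u = \<phi> x" "v = \<phi> y" using u v by auto
    then show "u \<oplus>\<^bsub>?I\<^esub> v = v \<oplus>\<^bsub>?I\<^esub> u" by (simp add: M.a_comm)
  next
    fix u assume u: "u \<in> carrier ?I"
    obtain x where "x \<in> carrier M" "u = \<phi> x" using u by auto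
    then show "\<zero>\<^bsub>?I\<^esub> \<oplus>\<^bsub>?I\<^esub> u = u" by simp
  next
    fix u assume u: "u \<in> carrier ?I"
    obtain x where x: "x \<in> carrier M" "u = \<phi> x" using u by auto
    then have "\<phi> (\<ominus>\<^bsub>M\<^esub> x) \<oplus>\<^bsub>?I\<^esub> u = \<zero>\<^bsub>?I\<^esub>" by (simp add: M.l_neg)
    moreover have "\<phi> (\<ominus>\<^bsub>M\<^esub> x) \<in> carrier ?I" using x by simp
    ultimately show "\<exists>y\<in>carrier ?I. y \<oplus>\<^bsub>?I\<^esub> u = \<zero>\<^bsub>?I\<^esub>" by blast
  qed
  show ?thesis
  proof (rule moduleI[OF R.is_cring ag])
    fix a u assume a: "a \<in> carrier R" and u: "u \<in> carrier ?I"
    obtain x where "x \<in> carrier M" "u = \<phi> x" using u by auto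
    then show "a \<odot>\<^bsub>?I\<^esub> u \<in> carrier ?I" using a by simp
  next
    fix a b u assume a: "a \<in> carrier R" and b: "b \<in> carrier R" and u: "u \<in> carrier ?I"
    obtain x where "x \<in> carrier M" "u = \<phi> x" using u by auto
    then show "(a \<oplus>\<^bsub>R\<^esub> b) \<odot>\<^bsub>?I\<^esub> u = a \<odot>\<^bsub>?I\<^esub> u \<oplus>\<^bsub>?I\<^esub> b \<odot>\<^bsub>?I\<^esub> u"
      using a b by (simp add: smult_l_distr)
  next
    fix a u v assume a: "a \<in> carrier R" and u: "u \<in> carrier ?I" and v: "v \<in> carrier ?I"
    obtain x y where "x \<in> carrier M" "y \<in> carrier M" "u = \<phi> x" "v = \<phi> y" using u v by auto
    then show "a \<odot>\<^bsub>?I\<^esub> (u \<oplus>\<^bsub>?I\<^esub> v) = a \<odot>\<^bsub>?I\<^esub> u \<oplus>\<^bsub>?I\<^esub> a \<odot>\<^bsub>?I\<^esub> v"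
      using a by (simp add: smult_r_distr)
  next
    fix a b u assume a: "a \<in> carrier R" and b: "b \<in> carrier R" and u: "u \<in> carrier ?I"
    obtain x where "x \<in> carrier M" "u = \<phi> x" using u by auto
    then show "(a \<otimes>\<^bsub>R\<^esub> b) \<odot>\<^bsub>?I\<^esub> u = a \<odot>\<^bsub>?I\<^esub> (b \<odot>\<^bsub>?I\<^esub> u)"
      using a b by (simp add: smult_assoc1)
  next
    fix u assume u: "u \<in> carrier ?I"
    obtain x where "x \<in> carrier M" "u = \<phi> x" using u by auto
    then show "\<one>\<^bsub>R\<^esub> \<odot>\<^bsub>?I\<^esub> u = u" by simp
  qed
qed

lemma img_hom: "mod_hom R M (imgmod \<phi> M) \<phi>"
  unfolding mod_hom_def by auto

lemma img_zero_iff: "x \<in> carrier M \<Longrightarrow> \<phi> x = \<zero>\<^bsub>imgmod \<phi> M\<^esub> \<longleftrightarrow> x \<in> N"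
  using eq[of x "\<zero>\<^bsub>M\<^esub>"] by (simp add: M.diff_zero)

lemma img_colon:
  assumes x: "x \<in> carrier M"
  shows "colon R (imgmod \<phi> M) {\<zero>\<^bsub>imgmod \<phi> M\<^esub>} (\<phi> x) = colon R M N x"
proof -
  have "a \<odot>\<^bsub>imgmod \<phi> M\<^esub> \<phi> x \<in> {\<zero>\<^bsub>imgmod \<phi> M\<^esub>} \<longleftrightarrow> a \<odot>\<^bsub>M\<^esub> x \<in> N" if a: "a \<in> carrier R" for a
  proof -
    have "a \<odot>\<^bsub>imgmod \<phi> M\<^esub> \<phi> x = \<phi> (a \<odot>\<^bsub>M\<^esub> x)" using Ismult[OF a x] .
    moreover have "a \<odot>\<^bsub>M\<^esub> x \<in> carrier M" using a x by simp
    ultimately show ?thesis using img_zero_iff[of "a \<odot>\<^bsub>M\<^esub> x"] by (simp only: singleton_iff)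
  qed
  then show ?thesis unfolding colon_def by blast
qed

lemma img_Ass: "Ass R (imgmod \<phi> M) = {P. primeideal P R \<and> (\<exists>x\<in>carrier M. P = colon R M N x)}"
proof -
  have eqv: "(\<exists>u\<in>carrier (imgmod \<phi> M). P = colon R (imgmod \<phi> M) {\<zero>\<^bsub>imgmod \<phi> M\<^esub>} u) \<longleftrightarrow>
        (\<exists>x\<in>carrier M. P = colon R M N x)" for P
  proof
    assume "\<exists>u\<in>carrier (imgmod \<phi> M). P = colon R (imgmod \<phi> M) {\<zero>\<^bsub>imgmod \<phi> M\<^esub>} u"
    then obtain u where u: "u \<in> carrier (imgmod \<phi> M)" "P = colon R (imgmod \<phi> M) {\<zero>\<^bsub>imgmod \<phi> M\<^esub>} u" by blast
    obtain x where x: "x \<in> carrier M" "u = \<phi> x" using u(1) by auto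
    show "\<exists>x\<in>carrier M. P = colon R M N x" using u(2) x img_colon[OF x(1)] by blast
  next
    assume "\<exists>x\<in>carrier M. P = colon R M N x"
    then obtain x where x: "x \<in> carrier M" "P = colon R M N x" by blast
    have "\<phi> x \<in> carrier (imgmod \<phi> M)" using x by simp
    then show "\<exists>u\<in>carrier (imgmod \<phi> M). P = colon R (imgmod \<phi> M) {\<zero>\<^bsub>imgmod \<phi> M\<^esub>} u"
      using x img_colon[OF x(1)] by blast
  qed
  show ?thesis unfolding Ass_colon by (simp only: eqv)
qed

end

definition qrep :: "('a,'b) module \<Rightarrow> 'b set \<Rightarrow> 'b \<Rightarrow> 'b" where
  "qrep M N x = (SOME y. y \<in> carrier M \<and> y \<ominus>\<^bsub>M\<^esub> x \<in> N)"

lemma qrep_eq: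
  assumes M: "module R M" and N: "submodule N R M" and x: "x \<in> carrier M" and y: "y \<in> carrier M"
  shows "qrep M N x = qrep M N y \<longleftrightarrow> x \<ominus>\<^bsub>M\<^esub> y \<in> N"
proof -
  interpret module R M by fact
  have P: "qrep M N z \<in> carrier M \<and> qrep M N z \<ominus>\<^bsub>M\<^esub> z \<in> N" if "z \<in> carrier M" for z
  proof -
    have "z \<ominus>\<^bsub>M\<^esub> z \<in> N" using that M.diff_self submodule_zero[OF N] by simp
    then have "z \<in> carrier M \<and> z \<ominus>\<^bsub>M\<^esub> z \<in> N" using that by blast
    then show ?thesis unfolding qrep_def by (rule someI[where P="\<lambda>w. w \<in> carrier M \<and> w \<ominus>\<^bsub>M\<^esub> z \<in> N"])
  qed
  have NM: "N \<subseteq> carrier M" using submoduleE(1)[OF N] .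
  show ?thesis
  proof
    assume e: "qrep M N x = qrep M N y"
    let ?r = "qrep M N x"
    have r: "?r \<in> carrier M" "?r \<ominus>\<^bsub>M\<^esub> x \<in> N" "?r \<ominus>\<^bsub>M\<^esub> y \<in> N" using P[OF x] P[OF y] e by auto
    have "x \<ominus>\<^bsub>M\<^esub> y = (x \<ominus>\<^bsub>M\<^esub> ?r) \<oplus>\<^bsub>M\<^esub> (?r \<ominus>\<^bsub>M\<^esub> y)" using x y r M.diff_trans[of x ?r y] by blast
    moreover have "x \<ominus>\<^bsub>M\<^esub> ?r = \<ominus>\<^bsub>M\<^esub> (?r \<ominus>\<^bsub>M\<^esub> x)" using x r by (simp add: M.diff_neg)
    moreover have "\<ominus>\<^bsub>M\<^esub> (?r \<ominus>\<^bsub>M\<^esub> x) \<in> N" using r submoduleE(3)[OF N] by blast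
    ultimately show "x \<ominus>\<^bsub>M\<^esub> y \<in> N" using r submoduleE(5)[OF N] by metis
  next
    assume d: "x \<ominus>\<^bsub>M\<^esub> y \<in> N"
    have d': "y \<ominus>\<^bsub>M\<^esub> x \<in> N" using submoduleE(3)[OF N d] x y by (simp add: M.diff_neg)
    have "(\<lambda>z. z \<in> carrier M \<and> z \<ominus>\<^bsub>M\<^esub> x \<in> N) = (\<lambda>z. z \<in> carrier M \<and> z \<ominus>\<^bsub>M\<^esub> y \<in> N)"
    proof (intro ext iffI)
      fix z assume z: "z \<in> carrier M \<and> z \<ominus>\<^bsub>M\<^esub> x \<in> N"
      have "z \<ominus>\<^bsub>M\<^esub> y = (z \<ominus>\<^bsub>M\<^esub> x) \<oplus>\<^bsub>M\<^esub> (x \<ominus>\<^bsub>M\<^esub> y)" using z x y M.diff_trans[of z x y] by blast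
      then show "z \<in> carrier M \<and> z \<ominus>\<^bsub>M\<^esub> y \<in> N" using z d submoduleE(5)[OF N] by metis
    next
      fix z assume z: "z \<in> carrier M \<and> z \<ominus>\<^bsub>M\<^esub> y \<in> N"
      have "z \<ominus>\<^bsub>M\<^esub> x = (z \<ominus>\<^bsub>M\<^esub> y) \<oplus>\<^bsub>M\<^esub> (y \<ominus>\<^bsub>M\<^esub> x)" using z x y M.diff_trans[of z y x] by blast
      then show "z \<in> carrier M \<and> z \<ominus>\<^bsub>M\<^esub> x \<in> N" using z d' submoduleE(5)[OF N] by metis
    qed
    then show "qrep M N x = qrep M N y" unfolding qrep_def by simp
  qed
qed

definition QuotM :: "('a,'b) module \<Rightarrow> 'b set \<Rightarrow> ('a,'b) module" where
  "QuotM M N = imgmod (qrep M N) M"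

lemma quot_imgctx:
  assumes M: "module R M" and N: "submodule N R M"
  shows "imgctx R M N (qrep M N)"
  unfolding imgctx_def imgctx_axioms_def using M N qrep_eq[OF M N] by auto

lemma quot_props:
  assumes M: "module R M" and N: "submodule N R M" and fg: "fg_module R M"
  shows "module R (QuotM M N)" "fg_module R (QuotM M N)"
    "Ass R (QuotM M N) = {P. primeideal P R \<and> (\<exists>x\<in>carrier M. P = colon R M N x)}"
    "short_exact R (M\<lparr>carrier := N\<rparr>) M (QuotM M N) id (qrep M N)"
proof -
  interpret imgctx R M N "qrep M N" using quot_imgctx[OF M N] .
  show mQ: "module R (QuotM M N)" unfolding QuotM_def using img_module .
  show "fg_module R (QuotM M N)" unfolding QuotM_def using fg_image[OF M img_module img_hom _ fg] by simp
  show "Ass R (QuotM M N) = {P. primeideal P R \<and> (\<exists>x\<in>carrier M. P = colon R M N x)}"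
    unfolding QuotM_def using img_Ass .
  have NM: "N \<subseteq> carrier M" using submoduleE(1)[OF N] .
  have "mod_hom R (M\<lparr>carrier := N\<rparr>) M id" unfolding mod_hom_def using NM by auto
  moreover have "mod_hom R M (QuotM M N) (qrep M N)" unfolding QuotM_def using img_hom .
  moreover have "qrep M N ` carrier M = carrier (QuotM M N)" unfolding QuotM_def by simp
  moreover have "id ` N = {x \<in> carrier M. qrep M N x = \<zero>\<^bsub>QuotM M N\<^esub>}"
    unfolding QuotM_def using img_zero_iff NM by auto
  ultimately show "short_exact R (M\<lparr>carrier := N\<rparr>) M (QuotM M N) id (qrep M N)"
    unfolding short_exact_def by auto
qed

lemma transport_props:
  assumes M: "module R M" and inj: "inj f"
  shows "module R (imgmod f M)" "mod_iso R M (imgmod f M) f"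
proof -
  interpret module R M by fact
  have "imgctx R M {\<zero>\<^bsub>M\<^esub>} f"
    unfolding imgctx_def imgctx_axioms_def using M zero_submodule inj
    by (auto simp: M.diff_eq0 inj_eq)
  then interpret imgctx R M "{\<zero>\<^bsub>M\<^esub>}" f .
  show "module R (imgmod f M)" using img_module .
  show "mod_iso R M (imgmod f M) f" unfolding mod_iso_def bij_betw_def
    using img_hom inj by (auto intro: inj_on_subset[of f UNIV])
qed



definition cyc :: "'a ring \<Rightarrow> 'a set \<Rightarrow> 'a fgmod" where
  "cyc R I = imgmod (\<lambda>a. {[qrep (selfmod R) I a]}) (selfmod R)"

lemma selfmod_fg:
  assumes "cring R" shows "fg_module R (selfmod R)"
proof -
  interpret cring R by fact
  interpret S: module R "selfmod R" using selfmod_module[OF assms] .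
  have fin: "finite {\<one>\<^bsub>R\<^esub>}" "{\<one>\<^bsub>R\<^esub>} \<subseteq> carrier (selfmod R)" by auto
  have "carrier (selfmod R) \<subseteq> span R (selfmod R) {\<one>\<^bsub>R\<^esub>}"
  proof
    fix a assume a: "a \<in> carrier (selfmod R)"
    have "\<one>\<^bsub>R\<^esub> \<in> span R (selfmod R) {\<one>\<^bsub>R\<^esub>}" using S.span_incl[OF fin] by auto
    then have "a \<otimes>\<^bsub>R\<^esub> \<one>\<^bsub>R\<^esub> \<in> span R (selfmod R) {\<one>\<^bsub>R\<^esub>}"
      using S.submoduleE(4)[OF S.span_submodule[OF fin], of a "\<one>\<^bsub>R\<^esub>"] a by simp
    then show "a \<in> span R (selfmod R) {\<one>\<^bsub>R\<^esub>}" using a by simp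
  qed
  then have "carrier (selfmod R) = span R (selfmod R) {\<one>\<^bsub>R\<^esub>}" using S.span_closed[OF fin] by auto
  then show ?thesis unfolding fg_module_span using fin by blast
qed

lemma cyc_ctx:
  assumes "cring R" "ideal I R"
  shows "imgctx R (selfmod R) I (\<lambda>a. {[qrep (selfmod R) I a]})"
proof -
  have M: "module R (selfmod R)" using selfmod_module[OF assms(1)] .
  have N: "submodule I R (selfmod R)" using ideal_iff_submodule[OF assms(1)] assms(2) by simp
  show ?thesis unfolding imgctx_def imgctx_axioms_def using M N qrep_eq[OF M N] by auto
qed

lemma cyc_props:
  assumes cr: "cring R" and I: "ideal I R"
  shows "module R (cyc R I)" "fg_module R (cyc R I)"
    "Ass R (cyc R I) = {P. primeideal P R \<and> (\<exists>x\<in>carrier R. P = colon R (selfmod R) I x)}"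
proof -
  interpret imgctx R "selfmod R" I "\<lambda>a. {[qrep (selfmod R) I a]}" using cyc_ctx[OF assms] .
  show "module R (cyc R I)" unfolding cyc_def using img_module .
  show "fg_module R (cyc R I)" unfolding cyc_def
    using fg_image[OF module_axioms img_module img_hom _ selfmod_fg[OF cr]] by simp
  show "Ass R (cyc R I) = {P. primeideal P R \<and> (\<exists>x\<in>carrier R. P = colon R (selfmod R) I x)}"
    unfolding cyc_def using img_Ass by simp
qed

lemma cyc_prime_Ass:
  assumes cr: "cring R" and p: "primeideal p R"
  shows "p \<in> Ass R (cyc R p)"
proof -
  have I: "ideal p R" using p by (rule primeideal.axioms(1))
  have sub: "p \<subseteq> carrier R" using I by (simp add: ideal.Icarr subsetI)
  interpret cring R by fact
  have "colon R (selfmod R) p \<one>\<^bsub>R\<^esub> = p" unfolding colon_def using sub by auto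
  then have "\<exists>x\<in>carrier R. p = colon R (selfmod R) p x" using one_closed by metis
  then show ?thesis unfolding cyc_props(3)[OF cr I] using p by simp
qed

lemma cyc_zero:
  assumes cr: "cring R"
  shows "Ass R (cyc R (carrier R)) = {}"
proof -
  interpret cring R by fact
  have I: "ideal (carrier R) R" by (rule oneideal)
  have "colon R (selfmod R) (carrier R) x = carrier R" if "x \<in> carrier R" for x
    unfolding colon_def using that by auto
  note eqc = this
  have np: "\<not> primeideal (carrier R) R" using primeideal.I_notcarr by blast
  have False if P1: "primeideal P R" and P2: "\<exists>x\<in>carrier R. P = colon R (selfmod R) (carrier R) x" for P
  proof -
    obtain x where "x \<in> carrier R" "P = colon R (selfmod R) (carrier R) x" using P2 by blast
    then have "P = carrier R" using eqc by simp
    then show False using P1 np by simp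
  qed
  then show ?thesis unfolding cyc_props(3)[OF cr I] by blast
qed

locale Dctx = cring R + noetherian_ring R for R :: "'a ring" +
  fixes D :: "'a fgmod set"
  assumes D: "sub_ext_closed R D"
begin

definition Phi where "Phi = (\<Union>M\<in>D. Ass R M)"

lemmas Dunf = D[unfolded sub_ext_closed_def]

lemma D_ne: "D \<noteq> {}" using Dunf by (rule conjunct1)

lemma D_mod: "M \<in> D \<Longrightarrow> module R M \<and> fg_module R M"
  using Dunf[THEN conjunct2, THEN conjunct1] by (rule bspec)

lemma D_iso: "M \<in> D \<Longrightarrow> module R N \<Longrightarrow> mod_iso R M N f \<Longrightarrow> N \<in> D"
proof -
  assume a: "M \<in> D" "module R N" "mod_iso R M N f"
  have "\<forall>N. module R N \<and> (\<exists>f. mod_iso R M N f) \<longrightarrow> N \<in> D"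
    using Dunf[THEN conjunct2, THEN conjunct2, THEN conjunct1] a(1) by (rule bspec)
  then show "N \<in> D" using a(2,3) by blast
qed

lemma D_sub: "M \<in> D \<Longrightarrow> submodule H R M \<Longrightarrow> M\<lparr>carrier := H\<rparr> \<in> D"
proof -
  assume a: "M \<in> D" "submodule H R M"
  have "\<forall>H. submodule H R M \<longrightarrow> M\<lparr>carrier := H\<rparr> \<in> D"
    using Dunf[THEN conjunct2, THEN conjunct2, THEN conjunct2, THEN conjunct1] a(1) by (rule bspec)
  then show ?thesis using a(2) by blast
qed

lemma D_ext: "L \<in> D \<Longrightarrow> N \<in> D \<Longrightarrow> module R M \<Longrightarrow> fg_module R M \<Longrightarrow> short_exact R L M N f g \<Longrightarrow> M \<in> D"
proof -
  assume a: "L \<in> D" "N \<in> D" "module R M" "fg_module R M" "short_exact R L M N f g"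
  have "\<forall>N\<in>D. \<forall>M. module R M \<and> fg_module R M \<and> (\<exists>f g. short_exact R L M N f g) \<longrightarrow> M \<in> D"
    using Dunf[THEN conjunct2, THEN conjunct2, THEN conjunct2, THEN conjunct2] a(1) by (rule bspec)
  then have "\<forall>M. module R M \<and> fg_module R M \<and> (\<exists>f g. short_exact R L M N f g) \<longrightarrow> M \<in> D"
    using a(2) by (rule bspec)
  then show ?thesis using a(3,4,5) by blast
qed

lemma D_zero:
  assumes Z: "module R Z" and cZ: "carrier Z = {\<zero>\<^bsub>Z\<^esub>}"
  shows "Z \<in> D"
proof -
  obtain M where M: "M \<in> D" using D_ne by auto
  have mM: "module R M" using D_mod[OF M] by auto
  interpret M: module R M by fact
  interpret Z: module R Z by fact
  have M0: "M\<lparr>carrier := {\<zero>\<^bsub>M\<^esub>}\<rparr> \<in> D" using D_sub[OF M M.zero_submodule] .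
  have "mod_iso R (M\<lparr>carrier := {\<zero>\<^bsub>M\<^esub>}\<rparr>) Z (\<lambda>_. \<zero>\<^bsub>Z\<^esub>)"
    unfolding mod_iso_def mod_hom_def bij_betw_def using cZ by auto
  then show ?thesis using D_iso[OF M0 Z] by blast
qed

lemma Phi_prime:
  assumes "p \<in> Phi"
  shows "\<exists>M0\<in>D. \<exists>x0\<in>carrier M0. p = colon R M0 {\<zero>\<^bsub>M0\<^esub>} x0 \<and> primeideal p R"
  using assms unfolding Phi_def Ass_colon by auto

lemma smult_image_submodule:
  assumes L: "module R L" and H: "submodule H R L" and c: "c \<in> carrier R"
  shows "submodule ((\<lambda>z. c \<odot>\<^bsub>L\<^esub> z) ` H) R L"
proof -
  interpret L: module R L by fact
  have HL: "H \<subseteq> carrier L" using L.submoduleE(1)[OF H] .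
  show ?thesis
  proof (rule L.submoduleI)
    show "(\<lambda>z. c \<odot>\<^bsub>L\<^esub> z) ` H \<subseteq> carrier L" using HL c by auto
    have "\<zero>\<^bsub>L\<^esub> = c \<odot>\<^bsub>L\<^esub> \<zero>\<^bsub>L\<^esub>" using c by simp
    then show "\<zero>\<^bsub>L\<^esub> \<in> (\<lambda>z. c \<odot>\<^bsub>L\<^esub> z) ` H" using L.submodule_zero[OF H] by blast
  next
    fix u assume "u \<in> (\<lambda>z. c \<odot>\<^bsub>L\<^esub> z) ` H"
    then obtain z where z: "z \<in> H" "u = c \<odot>\<^bsub>L\<^esub> z" by auto
    have "\<ominus>\<^bsub>L\<^esub> u = c \<odot>\<^bsub>L\<^esub> (\<ominus>\<^bsub>L\<^esub> z)" using z HL c by (auto simp: L.smult_r_minus)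
    then show "\<ominus>\<^bsub>L\<^esub> u \<in> (\<lambda>z. c \<odot>\<^bsub>L\<^esub> z) ` H" using L.submoduleE(3)[OF H z(1)] by blast
  next
    fix u v assume "u \<in> (\<lambda>z. c \<odot>\<^bsub>L\<^esub> z) ` H" "v \<in> (\<lambda>z. c \<odot>\<^bsub>L\<^esub> z) ` H"
    then obtain z w where z: "z \<in> H" "u = c \<odot>\<^bsub>L\<^esub> z" and w: "w \<in> H" "v = c \<odot>\<^bsub>L\<^esub> w" by auto
    have "z \<in> carrier L" "w \<in> carrier L" using z w HL by auto
    then have "u \<oplus>\<^bsub>L\<^esub> v = c \<odot>\<^bsub>L\<^esub> (z \<oplus>\<^bsub>L\<^esub> w)" using z w c by (simp add: L.smult_r_distr)
    then show "u \<oplus>\<^bsub>L\<^esub> v \<in> (\<lambda>z. c \<odot>\<^bsub>L\<^esub> z) ` H" using L.submoduleE(5)[OF H z(1) w(1)] by blast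
  next
    fix b u assume b: "b \<in> carrier R" and "u \<in> (\<lambda>z. c \<odot>\<^bsub>L\<^esub> z) ` H"
    then obtain z where z: "z \<in> H" "u = c \<odot>\<^bsub>L\<^esub> z" by auto
    have "b \<odot>\<^bsub>L\<^esub> u = c \<odot>\<^bsub>L\<^esub> (b \<odot>\<^bsub>L\<^esub> z)" using z HL c b
      by (auto simp: L.smult_assoc1[symmetric] m_comm)
    then show "b \<odot>\<^bsub>L\<^esub> u \<in> (\<lambda>z. c \<odot>\<^bsub>L\<^esub> z) ` H" using L.submoduleE(4)[OF H b z(1)] by blast
  qed
qed

lemma smult_hom:
  assumes L: "module R L" and H: "submodule H R L" and K: "submodule K R L" and c: "c \<in> carrier R"
    and img: "(\<lambda>z. c \<odot>\<^bsub>L\<^esub> z) ` H \<subseteq> K"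
  shows "mod_hom R (L\<lparr>carrier := H\<rparr>) (L\<lparr>carrier := K\<rparr>) (\<lambda>z. c \<odot>\<^bsub>L\<^esub> z)"
proof -
  interpret L: module R L by fact
  have HL: "H \<subseteq> carrier L" using L.submoduleE(1)[OF H] .
  show ?thesis unfolding mod_hom_def
    using img HL c by (auto simp: L.smult_r_distr L.smult_assoc1[symmetric] m_comm subset_iff)
qed

lemma incl_hom:
  assumes L: "module R L" and H: "submodule H R L" and K: "submodule K R L" and HK: "H \<subseteq> K"
  shows "mod_hom R (L\<lparr>carrier := H\<rparr>) (L\<lparr>carrier := K\<rparr>) id"
  unfolding mod_hom_def using HK by auto

end


context abelian_group begin
lemma add_diff_cancel: "k \<in> carrier G \<Longrightarrow> u \<in> carrier G \<Longrightarrow> (k \<oplus> u) \<ominus> u = k"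
  by (simp add: a_minus_def a_assoc r_neg)
lemma diff_diff_cancel:
  assumes "z \<in> carrier G" "u \<in> carrier G" "v \<in> carrier G"
  shows "(z \<ominus> u) \<ominus> (z \<ominus> v) = v \<ominus> u"
proof -
  have "(z \<ominus> u) \<ominus> (z \<ominus> v) = (z \<ominus> u) \<oplus> (v \<ominus> z)"
    using assms diff_neg[of z v] by (simp add: a_minus_def)
  also have "\<dots> = (v \<ominus> z) \<oplus> (z \<ominus> u)" using assms by (simp add: a_minus_def a_comm)
  also have "\<dots> = v \<ominus> u" using assms diff_trans[of v z u] by simp
  finally show ?thesis .
qed
end

context Dctx begin

lemma Phi_sub: "p \<in> Phi \<Longrightarrow> p \<subseteq> carrier R"
  using Phi_prime[of p] by (metis primeideal.axioms(1) ideal.Icarr subsetI)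

lemma tf_in_D:
  fixes L :: "'a fgmod"
  assumes L: "module R L" and p: "p \<in> Phi" and S: "finite S" "S \<subseteq> carrier L"
  shows "(\<forall>z\<in>span R L S. p \<subseteq> colon R L {\<zero>\<^bsub>L\<^esub>} z \<and> (z \<noteq> \<zero>\<^bsub>L\<^esub> \<longrightarrow> colon R L {\<zero>\<^bsub>L\<^esub>} z \<subseteq> p))
         \<Longrightarrow> L\<lparr>carrier := span R L S\<rparr> \<in> D"
  using S
proof (induct S rule: finite_induct)
  case empty
  interpret L: module R L by fact
  have "module R (L\<lparr>carrier := {\<zero>\<^bsub>L\<^esub>}\<rparr>)" using submodule.submodule_is_module[OF L.zero_submodule L] .
  then show ?case using D_zero L.span_empty by simp
next
  case (insert x S0)
  interpret L: module R L by fact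
  have S0: "finite S0" "S0 \<subseteq> carrier L" and x: "x \<in> carrier L" using insert by auto
  define H' where "H' = span R L S0"
  define H where "H = span R L (insert x S0)"
  have Hdef: "H = {k \<oplus>\<^bsub>L\<^esub> a \<odot>\<^bsub>L\<^esub> x | k a. k \<in> H' \<and> a \<in> carrier R}"
    unfolding H_def H'_def using L.span_insert[OF S0 x] .
  have subH': "submodule H' R L" unfolding H'_def using L.span_submodule[OF S0] .
  have SS: "finite (insert x S0)" "insert x S0 \<subseteq> carrier L" using S0 x by auto
  have subH: "submodule H R L" unfolding H_def using L.span_submodule[OF SS] .
  have H'H: "H' \<subseteq> H" unfolding H_def H'_def
    using L.span_least[OF S0 L.span_submodule[OF SS]] L.span_incl[OF SS] by auto
  have xH: "x \<in> H" unfolding H_def using L.span_incl[OF SS] by auto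
  have HL: "H \<subseteq> carrier L" using L.submoduleE(1)[OF subH] .
  have H'L: "H' \<subseteq> carrier L" using L.submoduleE(1)[OF subH'] .
  have all: "\<forall>z\<in>H. p \<subseteq> colon R L {\<zero>\<^bsub>L\<^esub>} z \<and> (z \<noteq> \<zero>\<^bsub>L\<^esub> \<longrightarrow> colon R L {\<zero>\<^bsub>L\<^esub>} z \<subseteq> p)"
    using insert(4) unfolding H_def .
  have tf1: "p \<subseteq> colon R L {\<zero>\<^bsub>L\<^esub>} z" if "z \<in> H" for z using bspec[OF all that] by (rule conjunct1)
  have tf2: "colon R L {\<zero>\<^bsub>L\<^esub>} z \<subseteq> p" if "z \<in> H" "z \<noteq> \<zero>\<^bsub>L\<^esub>" for z
  proof -
    have "z \<noteq> \<zero>\<^bsub>L\<^esub> \<longrightarrow> colon R L {\<zero>\<^bsub>L\<^esub>} z \<subseteq> p" using bspec[OF all that(1)] by (rule conjunct2)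
    then show ?thesis using that(2) by (rule mp)
  qed
  have cond: "\<forall>z\<in>span R L S0. p \<subseteq> colon R L {\<zero>\<^bsub>L\<^esub>} z \<and> (z \<noteq> \<zero>\<^bsub>L\<^esub> \<longrightarrow> colon R L {\<zero>\<^bsub>L\<^esub>} z \<subseteq> p)"
  proof
    fix z assume "z \<in> span R L S0"
    then have "z \<in> H" using H'H unfolding H'_def by blast
    then show "p \<subseteq> colon R L {\<zero>\<^bsub>L\<^esub>} z \<and> (z \<noteq> \<zero>\<^bsub>L\<^esub> \<longrightarrow> colon R L {\<zero>\<^bsub>L\<^esub>} z \<subseteq> p)"
      by (rule bspec[OF all])
  qed
  have IH: "L\<lparr>carrier := H'\<rparr> \<in> D" unfolding H'_def using insert(3)[OF cond S0(2)] .
  have mH: "module R (L\<lparr>carrier := H\<rparr>)" using submodule.submodule_is_module[OF subH L] .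
  have mH': "module R (L\<lparr>carrier := H'\<rparr>)" using submodule.submodule_is_module[OF subH' L] .
  have "\<exists>S. finite S \<and> S \<subseteq> H \<and> H = span R L S"
    using SS(1) L.span_incl[OF SS] unfolding H_def by (intro exI[of _ "insert x S0"]) simp
  then have fgH: "fg_module R (L\<lparr>carrier := H\<rparr>)" using fg_sub_iff[OF L subH] by simp
  have psub: "p \<subseteq> carrier R" using Phi_sub[OF p] .
  from Phi_prime[OF p] obtain M0 where M0D: "M0 \<in> D"
    and ex0: "\<exists>x0\<in>carrier M0. p = colon R M0 {\<zero>\<^bsub>M0\<^esub>} x0 \<and> primeideal p R" by (rule bexE)
  from ex0 obtain x0 where x0: "x0 \<in> carrier M0" and x0': "p = colon R M0 {\<zero>\<^bsub>M0\<^esub>} x0 \<and> primeideal p R"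
    by (rule bexE)
  have M0: "M0 \<in> D" "x0 \<in> carrier M0" "p = colon R M0 {\<zero>\<^bsub>M0\<^esub>} x0" "primeideal p R"
    using M0D x0 x0' by auto
  have "L\<lparr>carrier := H\<rparr> \<in> D"
  proof (cases "\<exists>c\<in>carrier R. c \<notin> p \<and> c \<odot>\<^bsub>L\<^esub> x \<in> H'")
    case True
    then obtain c where c: "c \<in> carrier R" "c \<notin> p" "c \<odot>\<^bsub>L\<^esub> x \<in> H'" by blast
    define cH where "cH = (\<lambda>z. c \<odot>\<^bsub>L\<^esub> z) ` H"
    have cHsub: "cH \<subseteq> H'"
    proof
      fix u assume "u \<in> cH"
      then obtain z where z: "z \<in> H" "u = c \<odot>\<^bsub>L\<^esub> z" unfolding cH_def by auto
      then obtain k a where k: "k \<in> H'" and a: "a \<in> carrier R" and zk: "z = k \<oplus>\<^bsub>L\<^esub> a \<odot>\<^bsub>L\<^esub> x"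
        using Hdef by blast
      have kL: "k \<in> carrier L" using k H'L by auto
      have "u = c \<odot>\<^bsub>L\<^esub> k \<oplus>\<^bsub>L\<^esub> a \<odot>\<^bsub>L\<^esub> (c \<odot>\<^bsub>L\<^esub> x)"
        using z(2) zk kL a c x by (simp add: L.smult_r_distr L.smult_assoc1[symmetric] m_comm)
      then show "u \<in> H'" using L.submoduleE(4,5)[OF subH'] k c a by simp
    qed
    have subcH: "submodule cH R L" unfolding cH_def using smult_image_submodule[OF L subH c(1)] .
    have "submodule cH R (L\<lparr>carrier := H'\<rparr>)" using L.submodule_sub_iff[OF subH'] subcH cHsub by auto
    then have cHD: "L\<lparr>carrier := cH\<rparr> \<in> D" using D_sub[OF IH] by simp
    have mcH: "module R (L\<lparr>carrier := cH\<rparr>)" using submodule.submodule_is_module[OF subcH L] .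
    have hom: "mod_hom R (L\<lparr>carrier := H\<rparr>) (L\<lparr>carrier := cH\<rparr>) (\<lambda>z. c \<odot>\<^bsub>L\<^esub> z)"
      using smult_hom[OF L subH subcH c(1)] unfolding cH_def by simp
    have inj: "inj_on (\<lambda>z. c \<odot>\<^bsub>L\<^esub> z) H"
    proof (rule inj_onI)
      fix z w assume z: "z \<in> H" and w: "w \<in> H" and e: "c \<odot>\<^bsub>L\<^esub> z = c \<odot>\<^bsub>L\<^esub> w"
      have zL: "z \<in> carrier L" "w \<in> carrier L" using z w HL by auto
      have d: "c \<odot>\<^bsub>L\<^esub> (z \<ominus>\<^bsub>L\<^esub> w) = \<zero>\<^bsub>L\<^esub>"
        using e zL c by (simp add: L.smult_diff[symmetric] L.diff_self)
      have dH: "z \<ominus>\<^bsub>L\<^esub> w \<in> H" using L.submodule_diff[OF subH z w] .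
      have "z \<ominus>\<^bsub>L\<^esub> w = \<zero>\<^bsub>L\<^esub>"
      proof (rule ccontr)
        assume "z \<ominus>\<^bsub>L\<^esub> w \<noteq> \<zero>\<^bsub>L\<^esub>"
        then have "colon R L {\<zero>\<^bsub>L\<^esub>} (z \<ominus>\<^bsub>L\<^esub> w) \<subseteq> p" using tf2[OF dH] by blast
        moreover have "c \<in> colon R L {\<zero>\<^bsub>L\<^esub>} (z \<ominus>\<^bsub>L\<^esub> w)" unfolding colon_def using c d by simp
        ultimately show False using c(2) by blast
      qed
      then show "z = w" using L.diff_eq0 zL by simp
    qed
    have iso: "mod_iso R (L\<lparr>carrier := H\<rparr>) (L\<lparr>carrier := cH\<rparr>) (\<lambda>z. c \<odot>\<^bsub>L\<^esub> z)"
      unfolding mod_iso_def bij_betw_def using hom inj unfolding cH_def by simp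
    show ?thesis using D_iso[OF cHD mH mod_iso_sym[OF mH mcH iso]] .
  next
    case False
    have M0m: "module R M0" using D_mod[OF M0(1)] by blast
    interpret M0: module R M0 by fact
    define V where "V = scyc R M0 {\<zero>\<^bsub>M0\<^esub>} x0"
    have subV: "submodule V R M0" unfolding V_def using scyc_submodule(1)[OF M0m M0.zero_submodule M0(2)] .
    have VD: "M0\<lparr>carrier := V\<rparr> \<in> D" using D_sub[OF M0(1) subV] .
    have Velem: "V = {a \<odot>\<^bsub>M0\<^esub> x0 | a. a \<in> carrier R}"
    proof
      show "V \<subseteq> {a \<odot>\<^bsub>M0\<^esub> x0 | a. a \<in> carrier R}" unfolding V_def scyc_def using M0(2) by auto
      show "{a \<odot>\<^bsub>M0\<^esub> x0 | a. a \<in> carrier R} \<subseteq> V"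
      proof
        fix v assume "v \<in> {a \<odot>\<^bsub>M0\<^esub> x0 | a. a \<in> carrier R}"
        then obtain a where a: "a \<in> carrier R" "v = a \<odot>\<^bsub>M0\<^esub> x0" by auto
        have "v = \<zero>\<^bsub>M0\<^esub> \<oplus>\<^bsub>M0\<^esub> a \<odot>\<^bsub>M0\<^esub> x0" using a M0(2) by simp
        then show "v \<in> V" unfolding V_def scyc_def using a by blast
      qed
    qed
    have uniq: "a \<odot>\<^bsub>M0\<^esub> x0 = b \<odot>\<^bsub>M0\<^esub> x0"
      if z: "z \<in> H" and a: "a \<in> carrier R" and b: "b \<in> carrier R"
        and za: "z \<ominus>\<^bsub>L\<^esub> a \<odot>\<^bsub>L\<^esub> x \<in> H'" and zb: "z \<ominus>\<^bsub>L\<^esub> b \<odot>\<^bsub>L\<^esub> x \<in> H'" for z a b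
    proof -
      have zL: "z \<in> carrier L" using z HL by auto
      have "(z \<ominus>\<^bsub>L\<^esub> a \<odot>\<^bsub>L\<^esub> x) \<ominus>\<^bsub>L\<^esub> (z \<ominus>\<^bsub>L\<^esub> b \<odot>\<^bsub>L\<^esub> x) = (b \<ominus>\<^bsub>R\<^esub> a) \<odot>\<^bsub>L\<^esub> x"
        using zL a b x by (simp add: L.diff_diff_cancel L.smult_ldiff)
      then have "(b \<ominus>\<^bsub>R\<^esub> a) \<odot>\<^bsub>L\<^esub> x \<in> H'" using L.submodule_diff[OF subH' za zb] by simp
      then have "b \<ominus>\<^bsub>R\<^esub> a \<in> p" using False a b by auto
      then have "(b \<ominus>\<^bsub>R\<^esub> a) \<odot>\<^bsub>M0\<^esub> x0 = \<zero>\<^bsub>M0\<^esub>" using M0(3) unfolding colon_def by auto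
      then have "b \<odot>\<^bsub>M0\<^esub> x0 \<ominus>\<^bsub>M0\<^esub> a \<odot>\<^bsub>M0\<^esub> x0 = \<zero>\<^bsub>M0\<^esub>" using a b M0(2) by (simp add: M0.smult_ldiff)
      then show ?thesis using M0.diff_eq0 a b M0(2) by simp
    qed
    have ex: "\<exists>a. a \<in> carrier R \<and> z \<ominus>\<^bsub>L\<^esub> a \<odot>\<^bsub>L\<^esub> x \<in> H'" if zH: "z \<in> H" for z
    proof -
      obtain k a where k: "k \<in> H'" and a: "a \<in> carrier R" and zk: "z = k \<oplus>\<^bsub>L\<^esub> a \<odot>\<^bsub>L\<^esub> x"
        using zH Hdef by blast
      have "z \<ominus>\<^bsub>L\<^esub> a \<odot>\<^bsub>L\<^esub> x = k" using zk k H'L a x by (simp add: L.add_diff_cancel subset_iff)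
      then show ?thesis using a k by auto
    qed
    define g where "g z = (SOME a. a \<in> carrier R \<and> z \<ominus>\<^bsub>L\<^esub> a \<odot>\<^bsub>L\<^esub> x \<in> H') \<odot>\<^bsub>M0\<^esub> x0" for z
    have gprop: "g z = a \<odot>\<^bsub>M0\<^esub> x0" if z: "z \<in> H" and a: "a \<in> carrier R" and za: "z \<ominus>\<^bsub>L\<^esub> a \<odot>\<^bsub>L\<^esub> x \<in> H'" for z a
    proof -
      let ?s = "SOME a. a \<in> carrier R \<and> z \<ominus>\<^bsub>L\<^esub> a \<odot>\<^bsub>L\<^esub> x \<in> H'"
      have s: "?s \<in> carrier R \<and> z \<ominus>\<^bsub>L\<^esub> ?s \<odot>\<^bsub>L\<^esub> x \<in> H'" using someI_ex[OF ex[OF z]] .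
      show ?thesis unfolding g_def using uniq[OF z _ a _ za] s by blast
    qed
    have gV: "g z \<in> V" if zH: "z \<in> H" for z
    proof -
      obtain a where "a \<in> carrier R" "z \<ominus>\<^bsub>L\<^esub> a \<odot>\<^bsub>L\<^esub> x \<in> H'" using ex[OF zH] by blast
      then show ?thesis using gprop[OF zH] Velem by auto
    qed
    have ghom: "mod_hom R (L\<lparr>carrier := H\<rparr>) (M0\<lparr>carrier := V\<rparr>) g"
      unfolding mod_hom_def
    proof (intro conjI ballI)
      show "g \<in> carrier (L\<lparr>carrier := H\<rparr>) \<rightarrow> carrier (M0\<lparr>carrier := V\<rparr>)" using gV by auto
    next
      fix z w assume z: "z \<in> carrier (L\<lparr>carrier := H\<rparr>)" and w: "w \<in> carrier (L\<lparr>carrier := H\<rparr>)"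
      then have z': "z \<in> H" and w': "w \<in> H" by auto
      obtain a where a: "a \<in> carrier R" "z \<ominus>\<^bsub>L\<^esub> a \<odot>\<^bsub>L\<^esub> x \<in> H'" using ex[OF z'] by blast
      obtain b where b: "b \<in> carrier R" "w \<ominus>\<^bsub>L\<^esub> b \<odot>\<^bsub>L\<^esub> x \<in> H'" using ex[OF w'] by blast
      have zL: "z \<in> carrier L" "w \<in> carrier L" using z' w' HL by auto
      have "(z \<oplus>\<^bsub>L\<^esub> w) \<ominus>\<^bsub>L\<^esub> (a \<oplus>\<^bsub>R\<^esub> b) \<odot>\<^bsub>L\<^esub> x = (z \<ominus>\<^bsub>L\<^esub> a \<odot>\<^bsub>L\<^esub> x) \<oplus>\<^bsub>L\<^esub> (w \<ominus>\<^bsub>L\<^esub> b \<odot>\<^bsub>L\<^esub> x)"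
        using zL a b x by (simp add: L.smult_l_distr L.diff_add_diff)
      then have "(z \<oplus>\<^bsub>L\<^esub> w) \<ominus>\<^bsub>L\<^esub> (a \<oplus>\<^bsub>R\<^esub> b) \<odot>\<^bsub>L\<^esub> x \<in> H'" using L.submoduleE(5)[OF subH' a(2) b(2)] by simp
      moreover have "z \<oplus>\<^bsub>L\<^esub> w \<in> H" using L.submoduleE(5)[OF subH z' w'] .
      ultimately have "g (z \<oplus>\<^bsub>L\<^esub> w) = (a \<oplus>\<^bsub>R\<^esub> b) \<odot>\<^bsub>M0\<^esub> x0" using gprop a b by simp
      then show "g (z \<oplus>\<^bsub>L\<lparr>carrier := H\<rparr>\<^esub> w) = g z \<oplus>\<^bsub>M0\<lparr>carrier := V\<rparr>\<^esub> g w"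
        using gprop[OF z' a] gprop[OF w' b] a b M0(2) by (simp add: M0.smult_l_distr)
    next
      fix r z assume r: "r \<in> carrier R" and z: "z \<in> carrier (L\<lparr>carrier := H\<rparr>)"
      then have z': "z \<in> H" by auto
      obtain a where a: "a \<in> carrier R" "z \<ominus>\<^bsub>L\<^esub> a \<odot>\<^bsub>L\<^esub> x \<in> H'" using ex[OF z'] by blast
      have zL: "z \<in> carrier L" using z' HL by auto
      have "r \<odot>\<^bsub>L\<^esub> z \<ominus>\<^bsub>L\<^esub> (r \<otimes>\<^bsub>R\<^esub> a) \<odot>\<^bsub>L\<^esub> x = r \<odot>\<^bsub>L\<^esub> (z \<ominus>\<^bsub>L\<^esub> a \<odot>\<^bsub>L\<^esub> x)"
        using zL a r x by (simp add: L.smult_diff[symmetric] L.smult_assoc1)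
      then have "r \<odot>\<^bsub>L\<^esub> z \<ominus>\<^bsub>L\<^esub> (r \<otimes>\<^bsub>R\<^esub> a) \<odot>\<^bsub>L\<^esub> x \<in> H'" using L.submoduleE(4)[OF subH' r a(2)] by simp
      moreover have "r \<odot>\<^bsub>L\<^esub> z \<in> H" using L.submoduleE(4)[OF subH r z'] .
      ultimately have "g (r \<odot>\<^bsub>L\<^esub> z) = (r \<otimes>\<^bsub>R\<^esub> a) \<odot>\<^bsub>M0\<^esub> x0" using gprop a r by simp
      then show "g (r \<odot>\<^bsub>L\<lparr>carrier := H\<rparr>\<^esub> z) = r \<odot>\<^bsub>M0\<lparr>carrier := V\<rparr>\<^esub> g z"
        using gprop[OF z' a] a r M0(2) by (simp add: M0.smult_assoc1)
    qed
    have gsurj: "g ` H = V"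
    proof
      show "g ` H \<subseteq> V" using gV by auto
      show "V \<subseteq> g ` H"
      proof
        fix v assume "v \<in> V"
        then obtain a where a: "a \<in> carrier R" "v = a \<odot>\<^bsub>M0\<^esub> x0" using Velem by auto
        have axH: "a \<odot>\<^bsub>L\<^esub> x \<in> H" using L.submoduleE(4)[OF subH a(1) xH] .
        have "a \<odot>\<^bsub>L\<^esub> x \<ominus>\<^bsub>L\<^esub> a \<odot>\<^bsub>L\<^esub> x \<in> H'" using a x L.submodule_zero[OF subH'] by (simp add: L.diff_self)
        then have "g (a \<odot>\<^bsub>L\<^esub> x) = v" using gprop[OF axH a(1)] a by simp
        then show "v \<in> g ` H" using axH by force
      qed
    qed
    have gker: "id ` H' = {z \<in> carrier (L\<lparr>carrier := H\<rparr>). g z = \<zero>\<^bsub>M0\<lparr>carrier := V\<rparr>\<^esub>}"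
    proof
      show "id ` H' \<subseteq> {z \<in> carrier (L\<lparr>carrier := H\<rparr>). g z = \<zero>\<^bsub>M0\<lparr>carrier := V\<rparr>\<^esub>}"
      proof
        fix z assume "z \<in> id ` H'"
        then have z: "z \<in> H'" by simp
        have zL: "z \<in> carrier L" using z H'L by auto
        have "z \<ominus>\<^bsub>L\<^esub> \<zero>\<^bsub>R\<^esub> \<odot>\<^bsub>L\<^esub> x \<in> H'" using z zL x by (simp add: L.diff_zero)
        then have "g z = \<zero>\<^bsub>M0\<^esub>" using gprop[of z "\<zero>\<^bsub>R\<^esub>"] z H'H M0(2) by auto
        then show "z \<in> {z \<in> carrier (L\<lparr>carrier := H\<rparr>). g z = \<zero>\<^bsub>M0\<lparr>carrier := V\<rparr>\<^esub>}" using z H'H by auto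
      qed
      show "{z \<in> carrier (L\<lparr>carrier := H\<rparr>). g z = \<zero>\<^bsub>M0\<lparr>carrier := V\<rparr>\<^esub>} \<subseteq> id ` H'"
      proof
        fix z assume "z \<in> {z \<in> carrier (L\<lparr>carrier := H\<rparr>). g z = \<zero>\<^bsub>M0\<lparr>carrier := V\<rparr>\<^esub>}"
        then have z: "z \<in> H" and gz: "g z = \<zero>\<^bsub>M0\<^esub>" by auto
        obtain a where a: "a \<in> carrier R" "z \<ominus>\<^bsub>L\<^esub> a \<odot>\<^bsub>L\<^esub> x \<in> H'" using ex[OF z] by blast
        have "a \<odot>\<^bsub>M0\<^esub> x0 = \<zero>\<^bsub>M0\<^esub>" using gprop[OF z a] gz by simp
        then have "a \<in> p" using M0(3) a unfolding colon_def by auto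
        then have "a \<odot>\<^bsub>L\<^esub> x = \<zero>\<^bsub>L\<^esub>" using tf1[OF xH] unfolding colon_def by auto
        then have "z \<in> H'" using a z HL by (simp add: L.diff_zero subset_iff)
        then show "z \<in> id ` H'" by simp
      qed
    qed
    have se: "short_exact R (L\<lparr>carrier := H'\<rparr>) (L\<lparr>carrier := H\<rparr>) (M0\<lparr>carrier := V\<rparr>) id g"
      unfolding short_exact_def using incl_hom[OF L subH' subH H'H] ghom gsurj gker by simp
    show ?thesis using D_ext[OF IH VD mH fgH se] .
  qed
  then show ?case unfolding H_def .
qed

end


context Dctx begin

lemma noeth: "noetherian_ring R"
  by (rule noetherian_ring_axioms)

lemma prime_pow_mem:
  assumes q: "primeideal q R" and a: "a \<in> carrier R"
  shows "a [^]\<^bsub>R\<^esub> (e::nat) \<in> q \<Longrightarrow> a \<in> q"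
proof (induct e)
  case 0
  then have "\<one>\<^bsub>R\<^esub> \<in> q" by simp
  then have "q = carrier R" using ideal.one_imp_carrier[OF primeideal.axioms(1)[OF q]] by simp
  then show ?case using primeideal.I_notcarr[OF q] by simp
next
  case (Suc e)
  then have "a [^]\<^bsub>R\<^esub> e \<otimes>\<^bsub>R\<^esub> a \<in> q" by simp
  then have "a [^]\<^bsub>R\<^esub> e \<in> q \<or> a \<in> q" using primeideal.I_prime[OF q] a by simp
  then show ?case using Suc(1) by blast
qed

lemma coprimary_in_D:
  fixes L :: "'a fgmod"
  assumes L: "module R L" and fgL: "fg_module R L" and p: "p \<in> Phi" and AL: "Ass R L \<subseteq> {p}"
  shows "L \<in> D"
proof -
  interpret L: module R L by fact
  obtain S where S: "finite S" "S \<subseteq> carrier L" "carrier L = span R L S"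
    using fgL unfolding fg_module_span by blast
  have psub: "p \<subseteq> carrier R" using Phi_sub[OF p] .
  have pideal: "ideal p R" using Phi_prime[OF p] primeideal.axioms(1) by blast
  have small: "colon R L {\<zero>\<^bsub>L\<^esub>} z \<subseteq> p" if z: "z \<in> carrier L" "z \<noteq> \<zero>\<^bsub>L\<^esub>" for z
  proof -
    obtain P where P: "P \<in> Ass R L" "colon R L {\<zero>\<^bsub>L\<^esub>} z \<subseteq> P" using ass_exists[OF L noeth z] by blast
    then show ?thesis using AL by auto
  qed
  have nil: "\<exists>e::nat. (a [^]\<^bsub>R\<^esub> e) \<odot>\<^bsub>L\<^esub> z = \<zero>\<^bsub>L\<^esub>" if a: "a \<in> p" and z: "z \<in> carrier L" for a z
  proof -
    have aR: "a \<in> carrier R" using a psub by auto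
    define I where "I i = colon R L {\<zero>\<^bsub>L\<^esub>} ((a [^]\<^bsub>R\<^esub> (i::nat)) \<odot>\<^bsub>L\<^esub> z)" for i
    have step: "(a [^]\<^bsub>R\<^esub> Suc i) \<odot>\<^bsub>L\<^esub> z = a \<odot>\<^bsub>L\<^esub> ((a [^]\<^bsub>R\<^esub> i) \<odot>\<^bsub>L\<^esub> z)" for i :: nat
      using aR z by (simp add: L.smult_assoc1[symmetric] m_comm nat_pow_closed)
    have wc: "(a [^]\<^bsub>R\<^esub> i) \<odot>\<^bsub>L\<^esub> z \<in> carrier L" for i :: nat using aR z by (simp add: nat_pow_closed)
    have mono1: "I i \<subseteq> I (Suc i)" for i :: nat
      unfolding I_def step using L.colon_smult[OF L.zero_submodule wc aR] .
    have mono: "I i \<subseteq> I j" if "i \<le> j" for i j :: nat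
      using lift_Suc_mono_le[of I, OF mono1 that] .
    have ch: "subset.chain {J. ideal J R} (range I)"
      unfolding subset.chain_def
    proof (intro conjI ballI)
      show "range I \<subseteq> {J. ideal J R}" unfolding I_def using L.colon_ideal[OF L.zero_submodule wc] by auto
      fix X1 Y1 assume "X1 \<in> range I" "Y1 \<in> range I"
      then obtain i j where "X1 = I i" "Y1 = I j" by auto
      then show "subset.Peq X1 Y1 \<or> subset.Peq Y1 X1" using mono[of i j] mono[of j i] by (cases "i \<le> j") auto
    qed
    have "\<Union>(range I) \<in> range I" using ideal_chain_is_trivial[OF _ ch] by simp
    then obtain k where k: "\<Union>(range I) = I k" by auto
    have Ik: "I (Suc k) = I k" using k mono1[of k] by auto
    define w where "w = (a [^]\<^bsub>R\<^esub> k) \<odot>\<^bsub>L\<^esub> z"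
    have wL: "w \<in> carrier L" unfolding w_def using wc .
    have "w = \<zero>\<^bsub>L\<^esub>"
    proof (rule ccontr)
      assume wn: "w \<noteq> \<zero>\<^bsub>L\<^esub>"
      obtain b where b: "b \<in> carrier R" "b \<odot>\<^bsub>L\<^esub> w \<notin> {\<zero>\<^bsub>L\<^esub>}"
        "primeideal (colon R L {\<zero>\<^bsub>L\<^esub>} (b \<odot>\<^bsub>L\<^esub> w)) R"
        using L.exists_prime_colon[OF noeth L.zero_submodule wL] wn by auto
      have "colon R L {\<zero>\<^bsub>L\<^esub>} (b \<odot>\<^bsub>L\<^esub> w) \<in> Ass R L" unfolding Ass_colon using b wL by auto
      then have "colon R L {\<zero>\<^bsub>L\<^esub>} (b \<odot>\<^bsub>L\<^esub> w) = p" using AL by auto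
      then have "a \<odot>\<^bsub>L\<^esub> (b \<odot>\<^bsub>L\<^esub> w) = \<zero>\<^bsub>L\<^esub>" using a unfolding colon_def by auto
      then have "b \<odot>\<^bsub>L\<^esub> (a \<odot>\<^bsub>L\<^esub> w) = \<zero>\<^bsub>L\<^esub>"
        using aR b(1) wL by (simp add: L.smult_assoc1[symmetric] m_comm)
      then have "b \<in> I (Suc k)" unfolding I_def step w_def[symmetric] colon_def using b(1) by simp
      then have "b \<in> I k" using Ik by simp
      then have "b \<odot>\<^bsub>L\<^esub> w = \<zero>\<^bsub>L\<^esub>" unfolding I_def w_def[symmetric] colon_def by simp
      then show False using b(2) by simp
    qed
    then show ?thesis unfolding w_def by blast
  qed
  define Nk where "Nk = rec_nat {\<zero>\<^bsub>L\<^esub>} (\<lambda>_ N. {z \<in> carrier L. \<forall>a\<in>p. a \<odot>\<^bsub>L\<^esub> z \<in> N})"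
  have Nk0: "Nk 0 = {\<zero>\<^bsub>L\<^esub>}" unfolding Nk_def by simp
  have NkS: "Nk (Suc k) = {z \<in> carrier L. \<forall>a\<in>p. a \<odot>\<^bsub>L\<^esub> z \<in> Nk k}" for k unfolding Nk_def by simp
  have subNk: "submodule (Nk k) R L" for k
  proof (induct k)
    case 0 then show ?case using Nk0 L.zero_submodule by simp
  next
    case (Suc k)
    note N = Suc
    show ?case unfolding NkS
    proof (rule L.submoduleI)
      show "{z \<in> carrier L. \<forall>a\<in>p. a \<odot>\<^bsub>L\<^esub> z \<in> Nk k} \<subseteq> carrier L" by auto
      show "\<zero>\<^bsub>L\<^esub> \<in> {z \<in> carrier L. \<forall>a\<in>p. a \<odot>\<^bsub>L\<^esub> z \<in> Nk k}"
        using L.submodule_zero[OF N] psub by auto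
    next
      fix u assume u: "u \<in> {z \<in> carrier L. \<forall>a\<in>p. a \<odot>\<^bsub>L\<^esub> z \<in> Nk k}"
      have "a \<odot>\<^bsub>L\<^esub> (\<ominus>\<^bsub>L\<^esub> u) \<in> Nk k" if a: "a \<in> p" for a
        using u a psub L.submoduleE(3)[OF N] by (auto simp: L.smult_r_minus)
      then show "\<ominus>\<^bsub>L\<^esub> u \<in> {z \<in> carrier L. \<forall>a\<in>p. a \<odot>\<^bsub>L\<^esub> z \<in> Nk k}" using u by auto
    next
      fix u v assume u: "u \<in> {z \<in> carrier L. \<forall>a\<in>p. a \<odot>\<^bsub>L\<^esub> z \<in> Nk k}"
        and v: "v \<in> {z \<in> carrier L. \<forall>a\<in>p. a \<odot>\<^bsub>L\<^esub> z \<in> Nk k}"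
      have "a \<odot>\<^bsub>L\<^esub> (u \<oplus>\<^bsub>L\<^esub> v) \<in> Nk k" if a: "a \<in> p" for a
        using u v a psub L.submoduleE(5)[OF N] by (auto simp: L.smult_r_distr)
      then show "u \<oplus>\<^bsub>L\<^esub> v \<in> {z \<in> carrier L. \<forall>a\<in>p. a \<odot>\<^bsub>L\<^esub> z \<in> Nk k}" using u v by auto
    next
      fix b u assume b: "b \<in> carrier R" and u: "u \<in> {z \<in> carrier L. \<forall>a\<in>p. a \<odot>\<^bsub>L\<^esub> z \<in> Nk k}"
      have "a \<odot>\<^bsub>L\<^esub> (b \<odot>\<^bsub>L\<^esub> u) \<in> Nk k" if a: "a \<in> p" for a
      proof -
        have "a \<odot>\<^bsub>L\<^esub> (b \<odot>\<^bsub>L\<^esub> u) = b \<odot>\<^bsub>L\<^esub> (a \<odot>\<^bsub>L\<^esub> u)"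
          using a b u psub by (auto simp: L.smult_assoc1[symmetric] m_comm)
        then show ?thesis using L.submoduleE(4)[OF N b] u a by auto
      qed
      then show "b \<odot>\<^bsub>L\<^esub> u \<in> {z \<in> carrier L. \<forall>a\<in>p. a \<odot>\<^bsub>L\<^esub> z \<in> Nk k}" using u b by auto
    qed
  qed
  have monoN: "Nk k \<subseteq> Nk (Suc k)" for k
  proof (induct k)
    case 0 then show ?case using Nk0 NkS psub by auto
  next
    case (Suc k)
    show ?case
    proof
      fix z assume "z \<in> Nk (Suc k)"
      then have "z \<in> carrier L" "\<forall>a\<in>p. a \<odot>\<^bsub>L\<^esub> z \<in> Nk k" using NkS by auto
      then show "z \<in> Nk (Suc (Suc k))" using Suc NkS[of "Suc k"] by auto
    qed
  qed
  have neSS: "range Nk \<noteq> {}" by auto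
  obtain N0 where N0: "N0 \<in> range Nk" "\<forall>W\<in>range Nk. N0 \<subseteq> W \<longrightarrow> W = N0"
    using L.noeth_max_submodule[OF noeth S neSS] subNk by blast
  then obtain k0 where k0: "N0 = Nk k0" by auto
  have stab: "Nk (Suc k0) = Nk k0" using N0(2) monoN[of k0] k0 by blast
  have full: "Nk k0 = carrier L"
  proof (rule ccontr)
    assume "Nk k0 \<noteq> carrier L"
    then obtain z where z: "z \<in> carrier L" "z \<notin> Nk k0" using L.submoduleE(1)[OF subNk] by blast
    obtain b where b: "b \<in> carrier R" "b \<odot>\<^bsub>L\<^esub> z \<notin> Nk k0" "primeideal (colon R L (Nk k0) (b \<odot>\<^bsub>L\<^esub> z)) R"
      using L.exists_prime_colon[OF noeth subNk z] by blast
    define y where "y = b \<odot>\<^bsub>L\<^esub> z"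
    define q where "q = colon R L (Nk k0) y"
    have yL: "y \<in> carrier L" unfolding y_def using b z by simp
    have q: "primeideal q R" unfolding q_def y_def using b(3) .
    show False
    proof (cases "p \<subseteq> q")
      case True
      then have "\<forall>a\<in>p. a \<odot>\<^bsub>L\<^esub> y \<in> Nk k0" unfolding q_def colon_def by auto
      then have "y \<in> Nk (Suc k0)" using NkS yL by auto
      then show False using stab b(2) unfolding y_def by simp
    next
      case False
      then obtain a where a: "a \<in> p" "a \<notin> q" by auto
      have aR: "a \<in> carrier R" using a psub by auto
      obtain e where e: "(a [^]\<^bsub>R\<^esub> (e::nat)) \<odot>\<^bsub>L\<^esub> y = \<zero>\<^bsub>L\<^esub>" using nil[OF a(1) yL] by blast
      have "a [^]\<^bsub>R\<^esub> e \<in> q" unfolding q_def colon_def using e aR L.submodule_zero[OF subNk] by (simp add: nat_pow_closed)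
      then show False using prime_pow_mem[OF q aR] a(2) by blast
    qed
  qed
  have main: "\<forall>H. submodule H R L \<and> H \<subseteq> Nk k \<longrightarrow> L\<lparr>carrier := H\<rparr> \<in> D" for k
  proof (induct k)
    case 0
    show ?case
    proof (intro allI impI)
      fix H assume H: "submodule H R L \<and> H \<subseteq> Nk 0"
      then have "H = {\<zero>\<^bsub>L\<^esub>}" using Nk0 L.submodule_zero by auto
      moreover have "module R (L\<lparr>carrier := {\<zero>\<^bsub>L\<^esub>}\<rparr>)"
        using submodule.submodule_is_module[OF L.zero_submodule L] .
      ultimately show "L\<lparr>carrier := H\<rparr> \<in> D" using D_zero by simp
    qed
  next
    case (Suc k)
    note IHk = Suc
    show ?case
    proof (intro allI impI)
      fix H assume H: "submodule H R L \<and> H \<subseteq> Nk (Suc k)"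
      have subH: "submodule H R L" and HN: "H \<subseteq> Nk (Suc k)" using H by auto
      have HL: "H \<subseteq> carrier L" using L.submoduleE(1)[OF subH] .
      obtain G where G: "G \<subseteq> carrier R" "finite G" "p = Idl\<^bsub>R\<^esub> G" using finetely_gen[OF pideal] by blast
      obtain gs where gs: "set gs = G" using finite_list[OF G(2)] by blast
      have Gp: "G \<subseteq> p" using G genideal_self by auto
      define K where "K ys = {z \<in> H. \<forall>a\<in>set ys. a \<odot>\<^bsub>L\<^esub> z = \<zero>\<^bsub>L\<^esub>}" for ys
      have Ksub: "K ys \<subseteq> carrier L" for ys unfolding K_def using HL by auto
      have subK: "submodule (K ys) R L" if ys: "set ys \<subseteq> G" for ys
      proof (rule L.submoduleI)
        show "K ys \<subseteq> carrier L" using Ksub .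
        show "\<zero>\<^bsub>L\<^esub> \<in> K ys" unfolding K_def using L.submodule_zero[OF subH] ys G(1) by auto
      next
        fix u assume u: "u \<in> K ys"
        then show "\<ominus>\<^bsub>L\<^esub> u \<in> K ys" unfolding K_def using L.submoduleE(3)[OF subH] ys G(1) HL
          by (auto simp: L.smult_r_minus subset_iff)
      next
        fix u v assume u: "u \<in> K ys" and v: "v \<in> K ys"
        then show "u \<oplus>\<^bsub>L\<^esub> v \<in> K ys" unfolding K_def using L.submoduleE(5)[OF subH] ys G(1) HL
          by (auto simp: L.smult_r_distr subset_iff)
      next
        fix b u assume b: "b \<in> carrier R" and u: "u \<in> K ys"
        have "a \<odot>\<^bsub>L\<^esub> (b \<odot>\<^bsub>L\<^esub> u) = \<zero>\<^bsub>L\<^esub>" if a: "a \<in> set ys" for a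
        proof -
          have aR: "a \<in> carrier R" using a ys G(1) by auto
          have uL: "u \<in> carrier L" using u Ksub by auto
          have "a \<odot>\<^bsub>L\<^esub> (b \<odot>\<^bsub>L\<^esub> u) = b \<odot>\<^bsub>L\<^esub> (a \<odot>\<^bsub>L\<^esub> u)"
            using aR b uL by (simp add: L.smult_assoc1[symmetric] m_comm)
          then show ?thesis using u a b unfolding K_def by simp
        qed
        then show "b \<odot>\<^bsub>L\<^esub> u \<in> K ys" using u b L.submoduleE(4)[OF subH] unfolding K_def by auto
      qed
      have fgK: "\<exists>T. finite T \<and> T \<subseteq> K ys \<and> K ys = span R L T" if ys: "set ys \<subseteq> G" for ys
        using L.noeth_sub_fg[OF noeth S(1,2) subK[OF ys]] Ksub S(3) by blast
      have claim: "\<forall>ys. set (xs @ ys) = G \<longrightarrow> L\<lparr>carrier := K ys\<rparr> \<in> D" for xs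
      proof (induct xs)
        case Nil
        show ?case
        proof (intro allI impI)
          fix ys assume "set ([] @ ys) = G"
          then have ys: "set ys = G" by simp
          obtain T where T: "finite T" "T \<subseteq> K ys" "K ys = span R L T" using fgK ys by blast
          have TL: "T \<subseteq> carrier L" using T(2) Ksub by blast
          have cond: "\<forall>z\<in>span R L T. p \<subseteq> colon R L {\<zero>\<^bsub>L\<^esub>} z \<and> (z \<noteq> \<zero>\<^bsub>L\<^esub> \<longrightarrow> colon R L {\<zero>\<^bsub>L\<^esub>} z \<subseteq> p)"
          proof
            fix z assume "z \<in> span R L T"
            then have zK: "z \<in> K ys" using T(3) by simp
            have zL: "z \<in> carrier L" using zK Ksub by auto
            have "G \<subseteq> colon R L {\<zero>\<^bsub>L\<^esub>} z" using zK ys G(1) unfolding K_def colon_def by auto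
            then have "Idl\<^bsub>R\<^esub> G \<subseteq> colon R L {\<zero>\<^bsub>L\<^esub>} z"
              using genideal_minimal[OF L.colon_ideal[OF L.zero_submodule zL]] by blast
            then show "p \<subseteq> colon R L {\<zero>\<^bsub>L\<^esub>} z \<and> (z \<noteq> \<zero>\<^bsub>L\<^esub> \<longrightarrow> colon R L {\<zero>\<^bsub>L\<^esub>} z \<subseteq> p)"
              using G(3) small[OF zL] by blast
          qed
          show "L\<lparr>carrier := K ys\<rparr> \<in> D" using tf_in_D[OF L p T(1) TL cond] T(3) by simp
        qed
      next
        case (Cons a xs')
        show ?case
        proof (intro allI impI)
          fix ys assume ys: "set ((a # xs') @ ys) = G"
          have "set (xs' @ (a # ys)) = G" using ys by auto
          then have KaD: "L\<lparr>carrier := K (a # ys)\<rparr> \<in> D" using Cons by blast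
          have ysG: "set ys \<subseteq> G" and ays: "set (a # ys) \<subseteq> G" and aG: "a \<in> G" using ys by auto
          have aR: "a \<in> carrier R" using aG G(1) by auto
          have ap: "a \<in> p" using aG Gp by auto
          define aK where "aK = (\<lambda>z. a \<odot>\<^bsub>L\<^esub> z) ` K ys"
          have subaK: "submodule aK R L" unfolding aK_def using smult_image_submodule[OF L subK[OF ysG] aR] .
          have aKN: "aK \<subseteq> Nk k"
          proof
            fix u assume "u \<in> aK"
            then obtain z where z: "z \<in> K ys" "u = a \<odot>\<^bsub>L\<^esub> z" unfolding aK_def by auto
            have "z \<in> Nk (Suc k)" using z(1) HN unfolding K_def by auto
            then show "u \<in> Nk k" using NkS z(2) ap by auto
          qed
          have aKD: "L\<lparr>carrier := aK\<rparr> \<in> D" using IHk subaK aKN by blast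
          have mK: "module R (L\<lparr>carrier := K ys\<rparr>)" using submodule.submodule_is_module[OF subK[OF ysG] L] .
          obtain T where T: "finite T" "T \<subseteq> K ys" "K ys = span R L T" using fgK[OF ysG] by blast
          have fgKm: "fg_module R (L\<lparr>carrier := K ys\<rparr>)" using fg_sub_iff[OF L subK[OF ysG]] T by blast
          have KK: "K (a # ys) \<subseteq> K ys" unfolding K_def by auto
          have hom: "mod_hom R (L\<lparr>carrier := K ys\<rparr>) (L\<lparr>carrier := aK\<rparr>) (\<lambda>z. a \<odot>\<^bsub>L\<^esub> z)"
            using smult_hom[OF L subK[OF ysG] subaK aR] unfolding aK_def by simp
          have ker: "id ` K (a # ys) = {z \<in> carrier (L\<lparr>carrier := K ys\<rparr>). a \<odot>\<^bsub>L\<^esub> z = \<zero>\<^bsub>L\<lparr>carrier := aK\<rparr>\<^esub>}"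
            unfolding K_def by auto
          have se: "short_exact R (L\<lparr>carrier := K (a # ys)\<rparr>) (L\<lparr>carrier := K ys\<rparr>) (L\<lparr>carrier := aK\<rparr>) id (\<lambda>z. a \<odot>\<^bsub>L\<^esub> z)"
            unfolding short_exact_def using incl_hom[OF L subK[OF ays] subK[OF ysG] KK] hom ker
            unfolding aK_def by simp
          show "L\<lparr>carrier := K ys\<rparr> \<in> D" using D_ext[OF KaD aKD mK fgKm se] .
        qed
      qed
      have "K [] = H" unfolding K_def by simp
      then show "L\<lparr>carrier := H\<rparr> \<in> D" using claim[of gs] gs by force
    qed
  qed
  have "L\<lparr>carrier := carrier L\<rparr> \<in> D" using main[of k0] full L.carrier_is_submodule by blast
  then show ?thesis by simp
qed


lemma D_char_aux:
  "\<forall>M::'a fgmod. module R M \<and> fg_module R M \<and> Ass R M \<subseteq> Phi \<and> card (Ass R M) = n \<longrightarrow> M \<in> D"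
proof (induct n rule: less_induct)
  case (less n)
  show ?case
  proof (intro allI impI)
    fix M :: "'a fgmod"
    assume asm: "module R M \<and> fg_module R M \<and> Ass R M \<subseteq> Phi \<and> card (Ass R M) = n"
    have M: "module R M" and fgM: "fg_module R M" and AM: "Ass R M \<subseteq> Phi" and cM: "card (Ass R M) = n"
      using asm by auto
    interpret M: module R M by fact
    have finA: "finite (Ass R M)" using ass_finite[OF M noeth fgM] .
    obtain S where S: "finite S" "S \<subseteq> carrier M" "carrier M = span R M S"
      using fgM unfolding fg_module_span by blast
    show "M \<in> D"
    proof (cases "Ass R M = {}")
      case True
      then show ?thesis using D_zero[OF M] Ass_empty[OF M noeth] by simp
    next
      case False
      then obtain p where pA: "p \<in> Ass R M" by blast
      have pPhi: "p \<in> Phi" using pA AM by auto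
      define SS where "SS = {N. submodule N R M \<and> p \<notin> Ass R (M\<lparr>carrier := N\<rparr>)}"
      have "{\<zero>\<^bsub>M\<^esub>} \<in> SS" unfolding SS_def using M.zero_submodule Ass_zero_sub[OF M] by auto
      then have neSS: "SS \<noteq> {}" by blast
      have subSS: "\<And>W. W \<in> SS \<Longrightarrow> submodule W R M" unfolding SS_def by blast
      obtain N where N: "N \<in> SS" "\<forall>W\<in>SS. N \<subseteq> W \<longrightarrow> W = N"
        using M.noeth_max_submodule[OF noeth S neSS subSS] by blast
      have subN: "submodule N R M" and pN: "p \<notin> Ass R (M\<lparr>carrier := N\<rparr>)" using N(1) unfolding SS_def by auto
      have NM: "N \<subseteq> carrier M" using M.submoduleE(1)[OF subN] .
      have e: "Ass R (M\<lparr>carrier := N\<rparr>) = {P. primeideal P R \<and> (\<exists>x\<in>N. P = colon R M {\<zero>\<^bsub>M\<^esub>} x)}"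
        by (rule Ass_sub)
      have ANM: "Ass R (M\<lparr>carrier := N\<rparr>) \<subseteq> Ass R M" unfolding e Ass_colon[of R M] using NM by blast
      have psub: "Ass R (M\<lparr>carrier := N\<rparr>) \<subset> Ass R M" using ANM pN pA by blast
      have cN: "card (Ass R (M\<lparr>carrier := N\<rparr>)) < n" using psubset_card_mono[OF finA psub] cM by simp
      have mN: "module R (M\<lparr>carrier := N\<rparr>)" using submodule.submodule_is_module[OF subN M] .
      obtain T where T: "finite T" "T \<subseteq> N" "N = span R M T"
        using M.noeth_sub_fg[OF noeth S(1,2) subN] NM S(3) by blast
      have fgN: "fg_module R (M\<lparr>carrier := N\<rparr>)" using fg_sub_iff[OF M subN] T by blast
      have ND: "M\<lparr>carrier := N\<rparr> \<in> D" using less[OF cN] mN fgN ANM AM by blast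
      note Q = quot_props[OF M subN fgM]
      have AQ: "Ass R (QuotM M N) \<subseteq> {p}"
      proof
        fix P assume "P \<in> Ass R (QuotM M N)"
        then obtain x where Pp: "primeideal P R" and x: "x \<in> carrier M" "P = colon R M N x"
          unfolding Q(3) by blast
        have xN: "x \<notin> N"
        proof
          assume "x \<in> N"
          then have "\<not> primeideal (colon R M N x) R" using colon_zero_not_prime[OF M subN] by blast
          then show False using Pp x(2) by simp
        qed
        note Hs = scyc_submodule[OF M subN x(1)]
        have qx: "primeideal (colon R M N x) R" using Pp x(2) by simp
        have AH: "Ass R (M\<lparr>carrier := scyc R M N x\<rparr>) \<subseteq> Ass R (M\<lparr>carrier := N\<rparr>) \<union> {P}"
          using ass_scyc[OF M subN x(1) qx] x(2) by simp
        have "scyc R M N x \<notin> SS"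
        proof
          assume "scyc R M N x \<in> SS"
          then have "scyc R M N x = N" using N(2) Hs(2) by blast
          then show False using Hs(3) xN by simp
        qed
        then have "p \<in> Ass R (M\<lparr>carrier := scyc R M N x\<rparr>)" unfolding SS_def using Hs(1) by blast
        then show "P \<in> {p}" using AH pN by blast
      qed
      have QD: "QuotM M N \<in> D" using coprimary_in_D[OF Q(1) Q(2) pPhi AQ] .
      show ?thesis using D_ext[OF ND QD M fgM Q(4)] .
    qed
  qed
qed

lemma D_char:
  fixes M :: "'a fgmod"
  shows "M \<in> D \<longleftrightarrow> module R M \<and> fg_module R M \<and> Ass R M \<subseteq> Phi"
proof
  assume "M \<in> D"
  then show "module R M \<and> fg_module R M \<and> Ass R M \<subseteq> Phi" using D_mod unfolding Phi_def by blast
next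
  assume "module R M \<and> fg_module R M \<and> Ass R M \<subseteq> Phi"
  then show "M \<in> D" using D_char_aux by blast
qed

end


lemma DctxI: "cring R \<Longrightarrow> noetherian_ring R \<Longrightarrow> sub_ext_closed R D \<Longrightarrow> Dctx R D"
  unfolding Dctx_def Dctx_axioms_def by blast

lemma cyc_prime_Ass_eq:
  assumes cr: "cring R" and p: "primeideal p R"
  shows "Ass R (cyc R p) = {p}"
proof
  show "{p} \<subseteq> Ass R (cyc R p)" using cyc_prime_Ass[OF cr p] by simp
  have I: "ideal p R" using p by (rule primeideal.axioms(1))
  show "Ass R (cyc R p) \<subseteq> {p}"
  proof
    fix P assume "P \<in> Ass R (cyc R p)"
    then obtain x where Pp: "primeideal P R" and x: "x \<in> carrier R" and Px: "P = colon R (selfmod R) p x"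
      unfolding cyc_props(3)[OF cr I] by blast
    have col: "colon R (selfmod R) p x = {a \<in> carrier R. a \<otimes>\<^bsub>R\<^esub> x \<in> p}" unfolding colon_def by simp
    show "P \<in> {p}"
    proof (cases "x \<in> p")
      case True
      then have "colon R (selfmod R) p x = carrier R" unfolding col using ideal.I_l_closed[OF I] by auto
      then show ?thesis using Pp Px primeideal.I_notcarr by metis
    next
      case False
      have "colon R (selfmod R) p x = p"
      proof
        show "colon R (selfmod R) p x \<subseteq> p" unfolding col using primeideal.I_prime[OF p] x False by blast
        show "p \<subseteq> colon R (selfmod R) p x" unfolding col using ideal.I_r_closed[OF I] x ideal.Icarr[OF I] by blast
      qed
      then show ?thesis using Px by simp
    qed
  qed
qed

lemma DPhi_closed:
  fixes R :: "'a ring"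
  assumes cr: "cring R" and noeth: "noetherian_ring R"
  shows "sub_ext_closed R {M::'a fgmod. module R M \<and> fg_module R M \<and> Ass R M \<subseteq> Ph}"
proof -
  define DP where "DP = {M::'a fgmod. module R M \<and> fg_module R M \<and> Ass R M \<subseteq> Ph}"
  have f1: "DP \<noteq> {}"
  proof -
    have I: "ideal (carrier R) R" using cr by (simp add: cring.axioms(1) ring.oneideal)
    have "cyc R (carrier R) \<in> DP" unfolding DP_def
      using cyc_props(1,2)[OF cr I] cyc_zero[OF cr] by simp
    then show ?thesis by blast
  qed
  have f2: "\<forall>M\<in>DP. module R M \<and> fg_module R M" unfolding DP_def by simp
  have f3: "\<forall>M\<in>DP. \<forall>N. module R N \<and> (\<exists>f. mod_iso R M N f) \<longrightarrow> N \<in> DP"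
  proof (intro ballI allI impI)
    fix M N :: "'a fgmod"
    assume M: "M \<in> DP" and N: "module R N \<and> (\<exists>f. mod_iso R M N f)"
    then have mM: "module R M" and fgM: "fg_module R M" and AM: "Ass R M \<subseteq> Ph" and mN: "module R N"
      unfolding DP_def by auto
    obtain f where f: "mod_iso R M N f" using N by blast
    have h: "mod_hom R M N f" and s: "f ` carrier M = carrier N" using f unfolding mod_iso_def bij_betw_def by auto
    have "fg_module R N" using fg_image[OF mM mN h s fgM] .
    moreover have "Ass R N = Ass R M" using ass_iso[OF mM mN f] .
    ultimately show "N \<in> DP" unfolding DP_def using mN AM by simp
  qed
  have f4: "\<forall>M\<in>DP. \<forall>H. submodule H R M \<longrightarrow> M\<lparr>carrier := H\<rparr> \<in> DP"
  proof (intro ballI allI impI)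
    fix M H
    assume M: "M \<in> DP" and H: "submodule H R M"
    then have mM: "module R M" and fgM: "fg_module R M" and AM: "Ass R M \<subseteq> Ph" unfolding DP_def by auto
    interpret M: module R M by fact
    obtain S where S: "finite S" "S \<subseteq> carrier M" "carrier M = span R M S"
      using fgM unfolding fg_module_span by blast
    have HM: "H \<subseteq> carrier M" using M.submoduleE(1)[OF H] .
    obtain T where T: "finite T" "T \<subseteq> H" "H = span R M T"
      using M.noeth_sub_fg[OF noeth S(1,2) H] HM S(3) by blast
    have fgH: "fg_module R (M\<lparr>carrier := H\<rparr>)" using fg_sub_iff[OF mM H] T by blast
    have mH: "module R (M\<lparr>carrier := H\<rparr>)" using submodule.submodule_is_module[OF H mM] .
    have e: "Ass R (M\<lparr>carrier := H\<rparr>) = {P. primeideal P R \<and> (\<exists>x\<in>H. P = colon R M {\<zero>\<^bsub>M\<^esub>} x)}"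
      by (rule Ass_sub)
    have "Ass R (M\<lparr>carrier := H\<rparr>) \<subseteq> Ass R M" unfolding e Ass_colon[of R M] using HM by blast
    then show "M\<lparr>carrier := H\<rparr> \<in> DP" unfolding DP_def using mH fgH AM by auto
  qed
  have f5: "\<forall>L\<in>DP. \<forall>N\<in>DP. \<forall>M. module R M \<and> fg_module R M \<and> (\<exists>f g. short_exact R L M N f g) \<longrightarrow> M \<in> DP"
  proof (intro ballI allI impI)
    fix L N M :: "'a fgmod"
    assume L: "L \<in> DP" and N: "N \<in> DP" and M: "module R M \<and> fg_module R M \<and> (\<exists>f g. short_exact R L M N f g)"
    then obtain f g where se: "short_exact R L M N f g" by blast
    have mL: "module R L" and mN: "module R N" and mM: "module R M" using L N M unfolding DP_def by auto
    have "Ass R M \<subseteq> Ass R L \<union> Ass R N" using ass_short_exact[OF mL mM mN se] .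
    then show "M \<in> DP" using L N M unfolding DP_def by auto
  qed
  show ?thesis unfolding DP_def[symmetric] sub_ext_closed_def using f1 f2 f3 f4 f5 by (intro conjI)
qed

theorem corollary2p5:
  fixes A :: "'a ring"
  assumes "cring A" and "noetherian_ring A"
  shows "bij_betw (\<lambda>D. \<Union>M\<in>D. Ass A M)
           {D :: 'a fgmod set. sub_ext_closed A D}
           (Pow (Spec A))"
proof -
  let ?f = "\<lambda>D::'a fgmod set. \<Union>M\<in>D. Ass A M"
  have char: "M \<in> D \<longleftrightarrow> module A M \<and> fg_module A M \<and> Ass A M \<subseteq> ?f D"
    if D: "sub_ext_closed A D" for D and M :: "'a fgmod"
  proof -
    interpret Dctx A D using DctxI[OF assms D] .
    show ?thesis using D_char[of M] unfolding Phi_def .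
  qed
  have inj: "inj_on ?f {D. sub_ext_closed A D}"
  proof (rule inj_onI)
    fix D1 D2 assume D1: "D1 \<in> {D. sub_ext_closed A D}" and D2: "D2 \<in> {D. sub_ext_closed A D}"
      and e: "?f D1 = ?f D2"
    have "M \<in> D1 \<longleftrightarrow> M \<in> D2" for M :: "'a fgmod" using char[of D1 M] char[of D2 M] D1 D2 e by simp
    then show "D1 = D2" by blast
  qed
  have img: "?f ` {D. sub_ext_closed A D} = Pow (Spec A)"
  proof
    show "?f ` {D. sub_ext_closed A D} \<subseteq> Pow (Spec A)"
      unfolding Ass_def Spec_def by blast
    show "Pow (Spec A) \<subseteq> ?f ` {D. sub_ext_closed A D}"
    proof
      fix Ph assume Ph: "Ph \<in> Pow (Spec A)"
      define DP where "DP = {M::'a fgmod. module A M \<and> fg_module A M \<and> Ass A M \<subseteq> Ph}"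
      have cl: "sub_ext_closed A DP" unfolding DP_def using DPhi_closed[OF assms] .
      have "?f DP = Ph"
      proof
        show "?f DP \<subseteq> Ph" unfolding DP_def by blast
        show "Ph \<subseteq> ?f DP"
        proof
          fix p assume pP: "p \<in> Ph"
          then have pr: "primeideal p A" using Ph unfolding Spec_def by blast
          have I: "ideal p A" using pr by (rule primeideal.axioms(1))
          have "cyc A p \<in> DP" unfolding DP_def
            using cyc_props(1,2)[OF assms(1) I] cyc_prime_Ass_eq[OF assms(1) pr] pP by simp
          moreover have "p \<in> Ass A (cyc A p)" using cyc_prime_Ass[OF assms(1) pr] .
          ultimately show "p \<in> ?f DP" by blast
        qed
      qed
      then show "Ph \<in> ?f ` {D. sub_ext_closed A D}" using cl by blast
    qed
  qed
  show ?thesis unfolding bij_betw_def using inj img by blast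
qed


end
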